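(* Let $l, m$ be positive integers and let $E_1,\dots,E_{m-1}$ be orthogonal $l\times l$ matrices satisfying $E_{\alpha}E_{\beta}+E_{\beta}E_{\alpha}=-2\delta_{\alpha\beta}\mathrm{Id}$ for $1\le\alpha,\beta\le m-1$. On $\mathbb{R}^{2l}=\mathbb{R}^l\oplus\mathbb{R}^l$ define $$P_0=\begin{pmatrix}\mathrm{Id}&0\\0&-\mathrm{Id}\end{pmatrix},\quad P_1=\begin{pmatrix}0&\mathrm{Id}\\ \mathrm{Id}&0\end{pmatrix},\quad P_{\alpha}=\begin{pmatrix}0&E_{\alpha-1}\\-E_{\alpha-1}&0\end{pmatrix}\ (2\le\alpha\le m).$$ Fix $0<t\le\frac{\pi}{4}$, put $a=\tan t$, $b=\cot t$, $Q_0=\begin{pmatrix}a\,\mathrm{Id}&0\\0&-b\,\mathrm{Id}\end{pmatrix}$ and $Q_{\alpha}=P_{\alpha}$ for $1\le\alpha\le m$, and let $$M_+^t=\{z=(x,y)\in\mathbb{R}^l\oplus\mathbb{R}^l:\ |x|=\cos t,\ |y|=\sin t,\ \langle x,y\rangle=0,\ \langle x,E_{\alpha}y\rangle=0\ (1\le\alpha\le m-1)\}$$ $$=\{z\in\mathbb{R}^{2l}: |z|=1,\ \langle z,Q_{\alpha}z\rangle=0\ (0\le\alpha\le m)\},$$ an embedded submanifold of $S^{2l-1}(1)$ of dimension $2l-m-2$. Then for every $z\in M_+^t$: (1) The normal space of $M_+^t$ in $S^{2l-1}(1)$ at $z$ is $N_zM_+^t=\mathrm{Span}\{Q_0z,Q_1z,\dots,Q_mz\}$,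 the tangent space is $T_zM_+^t=\{w\in\mathbb{R}^{2l}:\langle w,z\rangle=0,\ \langle w,Q_iz\rangle=0\ \text{for}\ 0\le i\le m\}$, and $\mathbb{R}^{2l}=T_zM_+^t\oplus N_zM_+^t\oplus\mathrm{Span}\{z\}$. (2) For $1\le\alpha\le m$, the shape operator $A_{\alpha}$ of $M_+^t$ with respect to the normal vector $Q_{\alpha}z$ has principal curvatures $1,0,-1$ with multiplicities $l-m-1$, $m$, $l-m-1$ respectively, and $T_zM_+^t=E_+(Q_{\alpha}z)\oplus E_0(Q_{\alpha}z)\oplus E_-(Q_{\alpha}z)$, where the principal spaces for $1,0,-1$ are $E_+(Q_{\alpha}z)=E_-(Q_{\alpha})\cap T_zM_+^t$, $E_0(Q_{\alpha}z)=\mathrm{Span}\{Q_{\alpha}Q_{\beta}z: 0\le\beta\le m,\ \beta\ne\alpha\}$, $E_-(Q_{\alpha}z)=E_+(Q_{\alpha})\cap T_zM_+^t$, with $E_{\pm}(Q_\alpha)$ the $\pm1$-eigenspaces of $Q_\alpha=P_\alpha$. (3) Let $E_+(Q_0)$ and $E_-(Q_0)$ be the eigenspaces of $Q_0$ with eigenvalues $a$ and $-b$ respectively. The shape operator $A_0$ with respect to the unit normal vector $Q_0z$ has principal curvatures $\cot t$, $0$, $-\tan t$ with multiplicities $l-m-1$, $m$, $l-m-1$ respectively, and $T_zM_+^t=E_+(Q_0z)\oplus E_0(Q_0z)\oplus E_-(Q_0z)$, where the principal spaces for $\cot t,0,-\tan t$ are $E_+(Q_0z)=E_-(Q_0)\cap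 T_zM_+^t$, $E_0(Q_0z)=\mathrm{Span}\{Q_0^{-1}Q_{\alpha}z:1\le\alpha\le m\}$, $E_-(Q_0z)=E_+(Q_0)\cap T_zM_+^t$.
   Context: $\{P_0,\dots,P_m\}$ is a symmetric Clifford system on $\mathbb{R}^{2l}$: symmetric orthogonal matrices with $P_\alpha P_\beta+P_\beta P_\alpha=2\delta_{\alpha\beta}\mathrm{Id}$, each having eigenvalues $\pm1$ with multiplicity $l$. For a normal vector $\xi$ of a submanifold of $S^{2l-1}(1)\subset\mathbb{R}^{2l}$, the shape operator is $A_\xi X=-(D_X\xi)^{\top}$ (tangential projection of the derivative), and principal curvatures are its eigenvalues. *)

theory Defs
  imports "HOL-Analysis.Analysis"
begin

definition Pmap :: "(nat \<Rightarrow> real^'l^'l) \<Rightarrow> nat \<Rightarrow> ((real^'l) \<times> (real^'l)) \<Rightarrow> ((real^'l) \<times> (real^'l))" where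
  "Pmap E \<alpha> z = (if \<alpha> = 0 then (fst z, - snd z)
                 else if \<alpha> = 1 then (snd z, fst z)
                 else (E (\<alpha> - 1) *v snd z, - (E (\<alpha> - 1) *v fst z)))"

definition Qmap :: "(nat \<Rightarrow> real^'l^'l) \<Rightarrow> real \<Rightarrow> nat \<Rightarrow> ((real^'l) \<times> (real^'l)) \<Rightarrow> ((real^'l) \<times> (real^'l))" where
  "Qmap E t \<alpha> z = (if \<alpha> = 0 then (tan t *\<^sub>R fst z, - (cot t *\<^sub>R snd z)) else Pmap E \<alpha> z)"

definition Mplus :: "(nat \<Rightarrow> real^'l^'l) \<Rightarrow> nat \<Rightarrow> real \<Rightarrow> ((real^'l) \<times> (real^'l)) set" where
  "Mplus E m t = {(x, y). norm x = cos t \<and> norm y = sin t \<and> x \<bullet> y = 0 \<and>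
                          (\<forall>\<alpha>\<in>{1..m-1}. x \<bullet> (E \<alpha> *v y) = 0)}"

definition tangent_space :: "'a::euclidean_space set \<Rightarrow> 'a \<Rightarrow> 'a set" where
  "tangent_space M z = {v. \<exists>\<gamma> e. e > 0 \<and> (\<forall>s\<in>{-e<..<e}. \<gamma> s \<in> M) \<and> \<gamma> 0 = z \<and>
                                   (\<gamma> has_vector_derivative v) (at 0)}"

definition normal_space_sphere :: "'a::euclidean_space set \<Rightarrow> 'a \<Rightarrow> 'a set" where
  "normal_space_sphere M z = {v. v \<bullet> z = 0 \<and> (\<forall>w\<in>tangent_space M z. v \<bullet> w = 0)}"

text \<open>Orthogonal projection onto a set S (meaningful for linear subspaces).\<close>
definition orth_proj :: "'a::euclidean_space set \<Rightarrow> 'a \<Rightarrow> 'a" where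
  "orth_proj S v = (THE u. u \<in> S \<and> (\<forall>w\<in>S. (v - u) \<bullet> w = 0))"

text \<open>Shape operator A_xi X = -(D_X xi)^T for a normal vector field xi (given as a
  differentiable map on the ambient space), at the point z of M.\<close>
definition shape_operator :: "'a::euclidean_space set \<Rightarrow> ('a \<Rightarrow> 'a) \<Rightarrow> 'a \<Rightarrow> 'a \<Rightarrow> 'a" where
  "shape_operator M \<xi> z X = - orth_proj (tangent_space M z) (frechet_derivative \<xi> (at z) X)"

definition eigenspace_in :: "'a::real_vector set \<Rightarrow> ('a \<Rightarrow> 'a) \<Rightarrow> real \<Rightarrow> 'a set" where
  "eigenspace_in S f c = {v \<in> S. f v = c *\<^sub>R v}"

definition direct_sum3 :: "'a::real_vector set \<Rightarrow> 'a set \<Rightarrow> 'a set \<Rightarrow> 'a set \<Rightarrow> bool" where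
  "direct_sum3 V A B C \<longleftrightarrow>
     V = {a + b + c | a b c. a \<in> A \<and> b \<in> B \<and> c \<in> C} \<and>
     (\<forall>a\<in>A. \<forall>b\<in>B. \<forall>c\<in>C. a + b + c = 0 \<longrightarrow> a = 0 \<and> b = 0 \<and> c = 0)"

end

theory Submission
  imports Defs
begin

lemma matneg: "(- A) *v v = - (A *v (v::real^'n))"
  by (simp add: matrix_vector_mult_def vec_eq_iff sum_negf)

lemma matm: "mat (-1) *v (v::real^'n) = - v"
proof -
  have "mat (-1) = - (mat 1 :: real^'n^'n)" by (simp add: vec_eq_iff mat_def)
  moreover have "(- A) *v v = - (A *v v)" for A :: "real^'n^'n"
    by (simp add: matrix_vector_mult_def vec_eq_iff sum_negf)
  ultimately show ?thesis by simp
qed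

lemma E_facts:
  fixes E :: "nat \<Rightarrow> real^'l^'l"
  assumes E_orth: "\<forall>\<alpha>\<in>{1..m-1}. orthogonal_matrix (E \<alpha>)"
    and E_cliff: "\<forall>\<alpha>\<in>{1..m-1}. \<forall>\<beta>\<in>{1..m-1}.
                    E \<alpha> ** E \<beta> + E \<beta> ** E \<alpha> = mat (if \<alpha> = \<beta> then -2 else 0)"
    and k: "k \<in> {1..m-1}"
  shows "E k *v (E k *v v) = - v"
    and "(E k *v u) \<bullet> v = - (u \<bullet> (E k *v v))"
    and "j \<in> {1..m-1} \<Longrightarrow> j \<noteq> k \<Longrightarrow> E j *v (E k *v v) = - (E k *v (E j *v v))"
proof -
  have sq: "E k ** E k = mat (-1)"
  proof -
    have "E k ** E k + E k ** E k = mat (-2)" using E_cliff k by auto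
    then have "2 *\<^sub>R (E k ** E k) = 2 *\<^sub>R mat (-1)"
      by (simp add: scaleR_2 vec_eq_iff mat_def)
    then show ?thesis by simp
  qed
  show "E k *v (E k *v v) = - v"
    by (simp add: matrix_vector_mul_assoc sq matm)
  have tr: "transpose (E k) = - E k"
  proof -
    have "transpose (E k) ** E k = mat 1" using E_orth k by (auto simp: orthogonal_matrix)
    then have "transpose (E k) ** E k ** E k = E k" by simp
    then have "transpose (E k) ** mat (-1) = E k" by (simp add: matrix_mul_assoc[symmetric] sq)
    then show ?thesis
      by (simp add: vec_eq_iff mat_def matrix_matrix_mult_def if_distrib sum.delta cong: if_cong)
        (metis add.inverse_inverse)
  qed
  show "(E k *v u) \<bullet> v = - (u \<bullet> (E k *v v))"
  proof -
    have "(E k *v u) \<bullet> v = (u v* transpose (E k)) \<bullet> v" by simp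
    also have "\<dots> = u \<bullet> (transpose (E k) *v v)" by (rule dot_lmul_matrix)
    also have "\<dots> = - (u \<bullet> (E k *v v))" by (simp add: tr matneg)
    finally show ?thesis .
  qed
  assume j: "j \<in> {1..m-1}" "j \<noteq> k"
  have "E j ** E k + E k ** E j = mat 0" using E_cliff k j by auto
  then have "E j ** E k = - (E k ** E j)" by (simp add: eq_neg_iff_add_eq_0)
  then show "E j *v (E k *v v) = - (E k *v (E j *v v))"
    by (simp add: matrix_vector_mul_assoc matneg)
qed

locale CS =
  fixes E :: "nat \<Rightarrow> real^'l^'l" and m :: nat and t :: real
  assumes Esq: "\<And>k v. k \<in> {1..m-1} \<Longrightarrow> E k *v (E k *v v) = - v"
  and Eskew: "\<And>k u v. k \<in> {1..m-1} \<Longrightarrow> (E k *v u) \<bullet> v = - (u \<bullet> (E k *v v))"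
  and Eanti: "\<And>j k v. j \<in> {1..m-1} \<Longrightarrow> k \<in> {1..m-1} \<Longrightarrow> j \<noteq> k \<Longrightarrow>
                 E j *v (E k *v v) = - (E k *v (E j *v v))"
  and m_pos: "m \<ge> 1" and t_pos: "0 < t" and t_le: "t \<le> pi / 4"
begin

lemma mv_neg: "(A::real^'n^'n) *v (- v) = - (A *v v)"
  by (simp add: matrix_vector_mult_def vec_eq_iff sum_negf)

abbreviation "P \<equiv> Pmap E"
abbreviation "Q \<equiv> Qmap E t"

lemma P_lin: "linear (P i)"
  by (rule linearI) (auto simp: Pmap_def matrix_vector_right_distrib matrix_vector_mult_scaleR)

lemma Q_P: "i \<noteq> 0 \<Longrightarrow> Q i = P i"
  by (rule ext) (simp add: Qmap_def)

lemma Q_lin: "linear (Q i)"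
proof (cases "i = 0")
  case True then show ?thesis
    by (auto intro!: linearI simp: Qmap_def algebra_simps)
next
  case False then show ?thesis using P_lin Q_P by simp
qed

lemma Eskew': "k \<in> {1..m-1} \<Longrightarrow> u \<bullet> (E k *v v) = - ((E k *v u) \<bullet> v)"
  using Eskew by simp

lemma P_sym: "i \<le> m \<Longrightarrow> P i u \<bullet> v = u \<bullet> P i v"
proof -
  assume i: "i \<le> m"
  obtain u1 u2 where u: "u = (u1, u2)" by fastforce
  obtain v1 v2 where v: "v = (v1, v2)" by fastforce
  show ?thesis
  proof (cases "i = 0 \<or> i = 1")
    case True then show ?thesis by (auto simp: Pmap_def u v inner_commute)
  next
    case False
    then have k: "i - 1 \<in> {1..m-1}" using i by auto
    show ?thesis using False Eskew[OF k, of u2 v1] Eskew[OF k, of u1 v2]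
      by (auto simp: Pmap_def u v inner_commute)
  qed
qed

lemma P_inv: "i \<le> m \<Longrightarrow> P i (P i u) = u"
proof -
  assume i: "i \<le> m"
  obtain u1 u2 where u: "u = (u1, u2)" by fastforce
  show ?thesis
  proof (cases "i = 0 \<or> i = 1")
    case True then show ?thesis by (auto simp: Pmap_def u)
  next
    case False
    then have k: "i - 1 \<in> {1..m-1}" using i by auto
    show ?thesis using False Esq[OF k, of u1] Esq[OF k, of u2]
      by (auto simp: Pmap_def u mv_neg)
  qed
qed

lemma P_anti: "i \<le> m \<Longrightarrow> j \<le> m \<Longrightarrow> i \<noteq> j \<Longrightarrow> P i (P j u) = - P j (P i u)"
proof -
  assume i: "i \<le> m" and j: "j \<le> m" and ij: "i \<noteq> j"
  obtain u1 u2 where u: "u = (u1, u2)" by fastforce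
  consider "i = 0" | "i = 1" | "i \<ge> 2" by linarith
  then show ?thesis
  proof cases
    case 1
    then show ?thesis using ij j by (cases "j = 1") (auto simp: Pmap_def u mv_neg)
  next
    case 2
    then show ?thesis using ij j by (cases "j = 0") (auto simp: Pmap_def u mv_neg)
  next
    case 3
    then have k: "i - 1 \<in> {1..m-1}" using i by auto
    consider "j = 0" | "j = 1" | "j \<ge> 2" by linarith
    then show ?thesis
    proof cases
      case 3
      then have k2: "j - 1 \<in> {1..m-1}" using j by auto
      have ne: "i - 1 \<noteq> j - 1" using ij \<open>i \<ge> 2\<close> 3 by auto
      show ?thesis using \<open>i \<ge> 2\<close> 3 Eanti[OF k k2 ne, of u1] Eanti[OF k k2 ne, of u2]
        by (auto simp: Pmap_def u mv_neg)
    qed (use \<open>i \<ge> 2\<close> in \<open>auto simp: Pmap_def u mv_neg\<close>)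
  qed
qed

lemma P_skew2: "i \<le> m \<Longrightarrow> j \<le> m \<Longrightarrow> i \<noteq> j \<Longrightarrow> u \<bullet> P i (P j u) = 0"
proof -
  assume a: "i \<le> m" "j \<le> m" "i \<noteq> j"
  have "u \<bullet> P i (P j u) = P i u \<bullet> P j u" using P_sym[OF a(1)] by simp
  also have "\<dots> = u \<bullet> P j (P i u)" using P_sym[OF a(2)] by (simp add: inner_commute)
  also have "\<dots> = - (u \<bullet> P i (P j u))" using P_anti[OF a(1,2,3)] by simp
  finally show ?thesis by simp
qed

lemma P_skew3: "i \<le> m \<Longrightarrow> j \<le> m \<Longrightarrow> k \<le> m \<Longrightarrow> i \<noteq> j \<Longrightarrow> i \<noteq> k \<Longrightarrow> j \<noteq> k \<Longrightarrow>
   u \<bullet> P i (P j (P k u)) = 0"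
proof -
  assume a: "i \<le> m" "j \<le> m" "k \<le> m" "i \<noteq> j" "i \<noteq> k" "j \<noteq> k"
  have "u \<bullet> P i (P j (P k u)) = P i u \<bullet> P j (P k u)" using P_sym[OF a(1)] by simp
  also have "\<dots> = P j (P i u) \<bullet> P k u" using P_sym[OF a(2)] by simp
  also have "\<dots> = P k (P j (P i u)) \<bullet> u" using P_sym[OF a(3)] by simp
  also have "P k (P j (P i u)) = - P i (P j (P k u))"
    using P_anti[OF a(1,2,4)] P_anti[OF a(1,3,5)] P_anti[OF a(2,3,6)]
      linear_neg[OF P_lin] by (metis minus_minus)
  finally show ?thesis by (simp add: inner_commute)
qed

end

context CS begin

lemma sinpos: "0 < sin t" using t_pos t_le pi_gt3 by (intro sin_gt_zero) auto
lemma cospos: "0 < cos t" using t_pos t_le pi_gt3 by (intro cos_gt_zero_pi) auto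
lemma tan_eq: "tan t = sin t / cos t" by (simp add: tan_def)
lemma cot_eq: "cot t = cos t / sin t" by (simp add: cot_def)
lemma tanpos: "0 < tan t" using sinpos cospos tan_eq by simp
lemma cotpos: "0 < cot t" using sinpos cospos cot_eq by simp
lemma sc1: "sin t ^ 2 + cos t ^ 2 = 1" by simp

lemma zQ0: "(x,y) \<bullet> Q 0 (x,y) = tan t * (x \<bullet> x) - cot t * (y \<bullet> y)"
  by (simp add: Qmap_def)
lemma zQ1: "(x,y) \<bullet> Q 1 (x,y) = 2 * (x \<bullet> y)"
  by (simp add: Qmap_def Pmap_def inner_commute)
lemma zQk: "k \<in> {2..m} \<Longrightarrow> (x,y) \<bullet> Q k (x,y) = 2 * (x \<bullet> (E (k-1) *v y))"
proof -
  assume k: "k \<in> {2..m}"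
  then have k1: "k - 1 \<in> {1..m-1}" by auto
  have "y \<bullet> (E (k-1) *v x) = - (x \<bullet> (E (k-1) *v y))"
    using Eskew[OF k1, of y x] by (simp add: inner_commute)
  then show ?thesis using k by (simp add: Qmap_def Pmap_def)
qed

lemma normPair1: "norm (x,y) = 1 \<longleftrightarrow> x \<bullet> x + y \<bullet> y = 1"
  by (simp add: norm_eq_1)

lemma M_eq: "Mplus E m t = {z. norm z = 1 \<and> (\<forall>\<alpha>\<in>{0..m}. z \<bullet> Q \<alpha> z = 0)}"
proof (intro set_eqI iffI)
  fix z assume z: "z \<in> Mplus E m t"
  obtain x y where zxy: "z = (x,y)" by fastforce
  have xx: "x \<bullet> x = cos t ^ 2" and yy: "y \<bullet> y = sin t ^ 2" and xy: "x \<bullet> y = 0"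
    and xE: "\<forall>\<alpha>\<in>{1..m-1}. x \<bullet> (E \<alpha> *v y) = 0"
    using z by (auto simp: Mplus_def zxy power2_norm_eq_inner[symmetric])
  have "norm z = 1" using xx yy by (simp add: zxy normPair1)
  moreover have "z \<bullet> Q \<alpha> z = 0" if a0: "\<alpha> \<in> {0..m}" for \<alpha>
  proof -
    consider "\<alpha> = 0" | "\<alpha> = 1" | "\<alpha> \<in> {2..m}" using a0 by atomize_elim auto
    then show ?thesis
    proof cases
      case 1 then show ?thesis using xx yy sinpos cospos
        by (simp add: zxy zQ0 tan_eq cot_eq power2_eq_square)
    next
      case 2 then show ?thesis using zQ1[of x y] xy by (simp add: zxy)
    next
      case 3
      then have "\<alpha> - 1 \<in> {1..m-1}" by auto
      then show ?thesis using xE 3 by (simp add: zxy zQk)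
    qed
  qed
  ultimately show "z \<in> {z. norm z = 1 \<and> (\<forall>\<alpha>\<in>{0..m}. z \<bullet> Q \<alpha> z = 0)}" by auto
next
  fix z assume z: "z \<in> {z. norm z = 1 \<and> (\<forall>\<alpha>\<in>{0..m}. z \<bullet> Q \<alpha> z = 0)}"
  obtain x y where zxy: "z = (x,y)" by fastforce
  have s: "x \<bullet> x + y \<bullet> y = 1" using z by (simp add: zxy normPair1)
  have "z \<bullet> Q 0 z = 0" using z by auto
  then have q0: "tan t * (x \<bullet> x) - cot t * (y \<bullet> y) = 0" by (simp add: zxy zQ0)
  have "z \<bullet> Q 1 z = 0" using z m_pos by auto
  then have q1: "x \<bullet> y = 0" using zQ1[of x y] by (simp add: zxy)
  have qk: "\<forall>\<alpha>\<in>{1..m-1}. x \<bullet> (E \<alpha> *v y) = 0"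
  proof
    fix \<alpha> assume a: "\<alpha> \<in> {1..m-1}"
    then have "\<alpha> + 1 \<in> {2..m}" by auto
    then have "z \<bullet> Q (\<alpha>+1) z = 0" using z by auto
    then show "x \<bullet> (E \<alpha> *v y) = 0" using zQk[of "\<alpha>+1" x y] \<open>\<alpha> + 1 \<in> {2..m}\<close> by (simp add: zxy)
  qed
  have "sin t ^ 2 * (x \<bullet> x) = cos t ^ 2 * (y \<bullet> y)"
    using q0 sinpos cospos by (simp add: tan_eq cot_eq field_simps power2_eq_square)
  then have xx: "x \<bullet> x = cos t ^ 2" and yy: "y \<bullet> y = sin t ^ 2"
    using s sc1 by algebra+
  have "norm x = cos t" using xx cospos by (simp add: norm_eq_sqrt_inner)
  moreover have "norm y = sin t" using yy sinpos by (simp add: norm_eq_sqrt_inner)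
  ultimately show "z \<in> Mplus E m t" using q1 qk by (simp add: Mplus_def zxy)
qed

end

lemma G_orth_dim:
  fixes f :: "'i \<Rightarrow> 'a::euclidean_space"
  assumes fin: "finite I" and orth: "\<And>i j. i \<in> I \<Longrightarrow> j \<in> I \<Longrightarrow> i \<noteq> j \<Longrightarrow> f i \<bullet> f j = 0"
    and nz: "\<And>i. i \<in> I \<Longrightarrow> f i \<noteq> 0"
  shows "dim (span (f ` I)) = card I"
proof -
  have inj: "inj_on f I"
  proof (rule inj_onI, rule ccontr)
    fix i j assume "i \<in> I" "j \<in> I" "f i = f j" "i \<noteq> j"
    then have "f i \<bullet> f i = 0" using orth by metis
    then show False using nz \<open>i \<in> I\<close> by simp
  qed
  have "pairwise orthogonal (f ` I)"
    unfolding pairwise_def orthogonal_def using orth by auto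
  moreover have "0 \<notin> f ` I" using nz by auto
  ultimately have "independent (f ` I)" by (rule pairwise_orthogonal_independent)
  then have "dim (span (f ` I)) = card (f ` I)" by (rule dim_span_eq_card_independent)
  also have "\<dots> = card I" using inj by (simp add: card_image)
  finally show ?thesis .
qed

lemma G_perp_dim:
  fixes h :: "'i \<Rightarrow> 'a::euclidean_space"
  assumes B: "subspace B" and fin: "finite I"
    and piB: "\<And>v. \<pi> v \<in> B" and piP: "\<And>y v. y \<in> B \<Longrightarrow> y \<bullet> \<pi> v = y \<bullet> v"
    and orth: "\<And>i j. i \<in> I \<Longrightarrow> j \<in> I \<Longrightarrow> i \<noteq> j \<Longrightarrow> \<pi> (h i) \<bullet> \<pi> (h j) = 0"
    and nz: "\<And>i. i \<in> I \<Longrightarrow> \<pi> (h i) \<noteq> 0"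
  shows "dim {y \<in> B. \<forall>i\<in>I. y \<bullet> h i = 0} + card I = dim B"
proof -
  let ?A = "span ((\<lambda>i. \<pi> (h i)) ` I)"
  have dA: "dim ?A = card I" by (rule G_orth_dim[OF fin orth nz])
  have AB: "?A \<subseteq> B" using piB B by (intro span_minimal) auto
  have eq: "{y \<in> B. \<forall>x \<in> ?A. orthogonal x y} = {y \<in> B. \<forall>i\<in>I. y \<bullet> h i = 0}"
  proof (intro set_eqI iffI)
    fix y assume y: "y \<in> {y \<in> B. \<forall>x \<in> ?A. orthogonal x y}"
    show "y \<in> {y \<in> B. \<forall>i\<in>I. y \<bullet> h i = 0}"
    proof (simp add: y[THEN CollectD, THEN conjunct1], intro ballI)
      fix i assume "i \<in> I"
      then have "\<pi> (h i) \<in> ?A" by (auto intro: span_base)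
      then have "\<pi> (h i) \<bullet> y = 0" using y by (auto simp: orthogonal_def)
      then show "y \<bullet> h i = 0" using piP y by (simp add: inner_commute)
    qed
  next
    fix y assume y: "y \<in> {y \<in> B. \<forall>i\<in>I. y \<bullet> h i = 0}"
    have "orthogonal y a" if "a \<in> ?A" for a
    proof (rule orthogonal_to_span[OF that])
      fix x assume "x \<in> (\<lambda>i. \<pi> (h i)) ` I"
      then obtain i where "i \<in> I" "x = \<pi> (h i)" by auto
      then show "orthogonal y x" using y piP by (auto simp: orthogonal_def)
    qed
    then show "y \<in> {y \<in> B. \<forall>x \<in> ?A. orthogonal x y}" using y by (auto simp: orthogonal_commute)
  qed
  have "dim {y \<in> B. \<forall>x \<in> ?A. orthogonal x y} + dim ?A = dim B"
    by (rule dim_subspace_orthogonal_to_vectors[OF subspace_span B AB])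
  then show ?thesis using eq dA by simp
qed

lemma G_proj_unique:
  fixes S :: "'a::euclidean_space set"
  assumes S: "subspace S" and u: "u \<in> S" and o: "\<forall>w\<in>S. (v - u) \<bullet> w = 0"
  shows "orth_proj S v = u"
  unfolding orth_proj_def
proof (rule the_equality)
  show "u \<in> S \<and> (\<forall>w\<in>S. (v - u) \<bullet> w = 0)" using u o by simp
next
  fix u' assume u': "u' \<in> S \<and> (\<forall>w\<in>S. (v - u') \<bullet> w = 0)"
  have d: "u - u' \<in> S" using S u u' by (simp add: subspace_diff)
  have "(v - u') \<bullet> (u - u') - (v - u) \<bullet> (u - u') = 0" using d u' o by simp
  then have "(u - u') \<bullet> (u - u') = 0" by (simp add: algebra_simps inner_diff_left inner_diff_right)
  then show "u' = u" by simp
qed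

lemma G_proj_exists:
  fixes S :: "'a::euclidean_space set"
  assumes S: "subspace S"
  shows "\<exists>u\<in>S. \<forall>w\<in>S. (v - u) \<bullet> w = 0"
proof -
  obtain y z where "y \<in> span S" "\<And>w. w \<in> span S \<Longrightarrow> orthogonal z w" "v = y + z"
    using orthogonal_subspace_decomp_exists[of S v] by metis
  moreover have sS: "span S = S" using S by simp
  ultimately have "y \<in> S" "\<forall>w\<in>S. (v - y) \<bullet> w = 0" by (auto simp: orthogonal_def)
  then show ?thesis by blast
qed

lemma G_proj_in:
  fixes S :: "'a::euclidean_space set"
  assumes S: "subspace S" and v: "v \<in> S" shows "orth_proj S v = v"
  using G_proj_unique[OF S v] by simp

lemma G_proj_perp:
  fixes S :: "'a::euclidean_space set"
  assumes S: "subspace S" and v: "\<forall>w\<in>S. v \<bullet> w = 0" shows "orth_proj S v = 0"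
  using G_proj_unique[OF S subspace_0[OF S]] v by simp

lemma G_proj_add:
  fixes S :: "'a::euclidean_space set"
  assumes S: "subspace S"
  shows "orth_proj S (v1 + v2) = orth_proj S v1 + orth_proj S v2"
proof -
  obtain u1 where u1: "u1 \<in> S" "\<forall>w\<in>S. (v1 - u1) \<bullet> w = 0" using G_proj_exists[OF S] by blast
  obtain u2 where u2: "u2 \<in> S" "\<forall>w\<in>S. (v2 - u2) \<bullet> w = 0" using G_proj_exists[OF S] by blast
  have "orth_proj S (v1 + v2) = u1 + u2"
    by (rule G_proj_unique[OF S]) (use u1 u2 S in \<open>auto simp: subspace_add algebra_simps inner_diff_left inner_add_left\<close>)
  then show ?thesis using G_proj_unique[OF S u1] G_proj_unique[OF S u2] by simp
qed

lemma G_proj_scale: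
  fixes S :: "'a::euclidean_space set"
  assumes S: "subspace S"
  shows "orth_proj S (c *\<^sub>R v) = c *\<^sub>R orth_proj S v"
proof -
  obtain u where u: "u \<in> S" "\<forall>w\<in>S. (v - u) \<bullet> w = 0" using G_proj_exists[OF S] by blast
  have "orth_proj S (c *\<^sub>R v) = c *\<^sub>R u"
  proof (rule G_proj_unique[OF S])
    show "c *\<^sub>R u \<in> S" using u S by (simp add: subspace_scale)
    show "\<forall>w\<in>S. (c *\<^sub>R v - c *\<^sub>R u) \<bullet> w = 0" using u
      by (simp add: scaleR_diff_right[symmetric])
  qed
  then show ?thesis using G_proj_unique[OF S u] by simp
qed

lemma G_span3:
  fixes T :: "'a::euclidean_space set"
  assumes T: "subspace T" and Pp: "subspace Pp" and Z: "subspace Z" and N: "subspace N"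
    and sub: "Pp \<subseteq> T" "Z \<subseteq> T" "N \<subseteq> T"
    and o1: "\<And>p q. p \<in> Pp \<Longrightarrow> q \<in> Z \<Longrightarrow> p \<bullet> q = 0"
    and o2: "\<And>p r. p \<in> Pp \<Longrightarrow> r \<in> N \<Longrightarrow> p \<bullet> r = 0"
    and o3: "\<And>q r. q \<in> Z \<Longrightarrow> r \<in> N \<Longrightarrow> q \<bullet> r = 0"
    and d: "dim Pp + dim Z + dim N = dim T"
  shows "T = {a + b + c | a b c. a \<in> Pp \<and> b \<in> Z \<and> c \<in> N}"
proof -
  let ?PZ = "{x + y |x y. x \<in> Pp \<and> y \<in> Z}"
  let ?W = "{x + y |x y. x \<in> ?PZ \<and> y \<in> N}"
  have sPZ: "subspace ?PZ" by (rule subspace_sums[OF Pp Z])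
  have sW: "subspace ?W" by (rule subspace_sums[OF sPZ N])
  have i1: "Pp \<inter> Z \<subseteq> {0}"
  proof
    fix x assume "x \<in> Pp \<inter> Z" then have "x \<bullet> x = 0" using o1 by blast
    then show "x \<in> {0}" by simp
  qed
  have i2: "?PZ \<inter> N \<subseteq> {0}"
  proof
    fix x assume x: "x \<in> ?PZ \<inter> N"
    then obtain p q where pq: "p \<in> Pp" "q \<in> Z" "x = p + q" by blast
    have "x \<bullet> x = p \<bullet> x + q \<bullet> x" using pq by (simp add: inner_add_left)
    also have "\<dots> = 0" using o2 o3 pq x by simp
    finally show "x \<in> {0}" by simp
  qed
  have h1: "dim (Pp \<inter> Z) = 0" using i1 by (simp only: dim_eq_0)
  have "dim ?PZ = dim Pp + dim Z" using dim_sums_Int[OF Pp Z] h1 by linarith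
  moreover have h2: "dim (?PZ \<inter> N) = 0" using i2 by (simp only: dim_eq_0)
  have "dim ?W = dim ?PZ + dim N" using dim_sums_Int[OF sPZ N] h2 by linarith
  ultimately have dW: "dim ?W = dim T" using d by simp
  have WT: "?W \<subseteq> T" using sub T by (auto intro!: subspace_add)
  have "?W = T" by (rule subspace_dim_equal[OF sW T WT]) (use dW in linarith)
  moreover have "?W = {a + b + c | a b c. a \<in> Pp \<and> b \<in> Z \<and> c \<in> N}" by blast
  ultimately show ?thesis by simp
qed

lemma G_eigen:
  fixes T :: "'a::euclidean_space set" and A :: "'a \<Rightarrow> 'a"
  assumes T: "subspace T" and Pp: "subspace Pp" and Z: "subspace Z" and N: "subspace N"
    and sub: "Pp \<subseteq> T" "Z \<subseteq> T" "N \<subseteq> T"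
    and o1: "\<And>p q. p \<in> Pp \<Longrightarrow> q \<in> Z \<Longrightarrow> p \<bullet> q = 0"
    and o2: "\<And>p r. p \<in> Pp \<Longrightarrow> r \<in> N \<Longrightarrow> p \<bullet> r = 0"
    and o3: "\<And>q r. q \<in> Z \<Longrightarrow> r \<in> N \<Longrightarrow> q \<bullet> r = 0"
    and d: "dim Pp + dim Z + dim N = dim T"
    and add: "\<And>u v. u \<in> T \<Longrightarrow> v \<in> T \<Longrightarrow> A (u + v) = A u + A v"
    and eP: "\<And>p. p \<in> Pp \<Longrightarrow> A p = c1 *\<^sub>R p"
    and eZ: "\<And>q. q \<in> Z \<Longrightarrow> A q = 0"
    and eN: "\<And>r. r \<in> N \<Longrightarrow> A r = c3 *\<^sub>R r"
    and c: "c1 \<noteq> 0" "c3 \<noteq> 0" "c1 \<noteq> c3"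
  shows "{c. \<exists>X\<in>T. X \<noteq> 0 \<and> A X = c *\<^sub>R X} \<subseteq> {c1, 0, c3}"
    and "eigenspace_in T A c1 = Pp" and "eigenspace_in T A 0 = Z" and "eigenspace_in T A c3 = N"
    and "direct_sum3 T Pp Z N"
proof -
  have span: "T = {a + b + c | a b c. a \<in> Pp \<and> b \<in> Z \<and> c \<in> N}"
    by (rule G_span3[OF T Pp Z N sub o1 o2 o3 d])
  have indep: "p = 0 \<and> q = 0 \<and> r = 0" if "p \<in> Pp" "q \<in> Z" "r \<in> N" "p + q + r = 0" for p q r
  proof -
    have e: "p + q + r = 0" using that by simp
    have "p \<bullet> p = p \<bullet> (p + q + r) - p \<bullet> q - p \<bullet> r" by (simp add: inner_add_right)
    then have 1: "p \<bullet> p = 0" using that(1-3) o1 o2 by (simp only: e inner_zero_right; simp)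
    have "q \<bullet> q = q \<bullet> (p + q + r) - p \<bullet> q - q \<bullet> r" by (simp add: inner_add_right inner_commute)
    then have 2: "q \<bullet> q = 0" using that(1-3) o1 o3 by (simp only: e inner_zero_right; simp)
    have "r \<bullet> r = r \<bullet> (p + q + r) - p \<bullet> r - q \<bullet> r" by (simp add: inner_add_right inner_commute)
    then have 3: "r \<bullet> r = 0" using that(1-3) o2 o3 by (simp only: e inner_zero_right; simp)
    show ?thesis using 1 2 3 by simp
  qed
  have key: "(c1 - c) *\<^sub>R p = 0 \<and> c *\<^sub>R q = 0 \<and> (c3 - c) *\<^sub>R r = 0"
    if "p \<in> Pp" "q \<in> Z" "r \<in> N" "A (p + q + r) = c *\<^sub>R (p + q + r)" for p q r c
  proof -
    have pT: "p \<in> T" "q \<in> T" "r \<in> T" using that sub by auto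
    have "A (p + q + r) = A p + A q + A r"
      using add[OF subspace_add[OF T pT(1,2)] pT(3)] add[OF pT(1,2)] by simp
    also have "\<dots> = c1 *\<^sub>R p + c3 *\<^sub>R r" using that eP eZ eN by simp
    finally have "A (p + q + r) = c1 *\<^sub>R p + c3 *\<^sub>R r" .
    then have "(c1 - c) *\<^sub>R p + (- c) *\<^sub>R q + (c3 - c) *\<^sub>R r = 0"
      using that(4) by (simp add: algebra_simps)
    moreover have "(c1 - c) *\<^sub>R p \<in> Pp" "(- c) *\<^sub>R q \<in> Z" "(c3 - c) *\<^sub>R r \<in> N"
      using that Pp Z N by (auto simp: subspace_scale subspace_neg)
    ultimately show ?thesis using indep by fastforce
  qed
  show "{c. \<exists>X\<in>T. X \<noteq> 0 \<and> A X = c *\<^sub>R X} \<subseteq> {c1, 0, c3}"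
  proof
    fix c assume "c \<in> {c. \<exists>X\<in>T. X \<noteq> 0 \<and> A X = c *\<^sub>R X}"
    then obtain X where X: "X \<in> T" "X \<noteq> 0" "A X = c *\<^sub>R X" by blast
    then obtain p q r where pqr: "p \<in> Pp" "q \<in> Z" "r \<in> N" "X = p + q + r" using span by blast
    show "c \<in> {c1, 0, c3}"
    proof (rule ccontr)
      assume "c \<notin> {c1, 0, c3}"
      then have "p = 0" "q = 0" "r = 0" using key[OF pqr(1-3)] X(3) pqr(4) by auto
      then show False using X pqr by simp
    qed
  qed
  show "eigenspace_in T A c1 = Pp"
  proof (intro set_eqI iffI)
    fix X assume "X \<in> eigenspace_in T A c1"
    then have X: "X \<in> T" "A X = c1 *\<^sub>R X" by (auto simp: eigenspace_in_def)
    then obtain p q r where pqr: "p \<in> Pp" "q \<in> Z" "r \<in> N" "X = p + q + r" using span by blast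
    then have "q = 0" "r = 0" using key[OF pqr(1-3)] X c by auto
    then show "X \<in> Pp" using pqr by simp
  qed (use sub eP in \<open>auto simp: eigenspace_in_def\<close>)
  show "eigenspace_in T A 0 = Z"
  proof (intro set_eqI iffI)
    fix X assume "X \<in> eigenspace_in T A 0"
    then have X: "X \<in> T" "A X = 0 *\<^sub>R X" by (auto simp: eigenspace_in_def)
    then obtain p q r where pqr: "p \<in> Pp" "q \<in> Z" "r \<in> N" "X = p + q + r" using span by blast
    then have "p = 0" "r = 0" using key[OF pqr(1-3)] X c by auto
    then show "X \<in> Z" using pqr by simp
  qed (use sub eZ in \<open>auto simp: eigenspace_in_def\<close>)
  show "eigenspace_in T A c3 = N"
  proof (intro set_eqI iffI)
    fix X assume "X \<in> eigenspace_in T A c3"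
    then have X: "X \<in> T" "A X = c3 *\<^sub>R X" by (auto simp: eigenspace_in_def)
    then obtain p q r where pqr: "p \<in> Pp" "q \<in> Z" "r \<in> N" "X = p + q + r" using span by blast
    then have "p = 0" "q = 0" using key[OF pqr(1-3)] X c by auto
    then show "X \<in> N" using pqr by simp
  qed (use sub eN in \<open>auto simp: eigenspace_in_def\<close>)
  show "direct_sum3 T Pp Z N"
    unfolding direct_sum3_def using span indep by blast
qed

context CS begin

definition "ca = (tan t - cot t) / 2"
definition "cb = (tan t + cot t) / 2"

lemma P_add: "P i (u + v) = P i u + P i v" using P_lin linear_add by blast
lemma P_scale: "P i (c *\<^sub>R u) = c *\<^sub>R P i u" using P_lin linear_scale by blast
lemma P_neg: "P i (- u) = - P i u" using P_lin linear_neg by blast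

lemma Q0_eq: "Q 0 u = ca *\<^sub>R u + cb *\<^sub>R P 0 u"
proof -
  have e1: "ca + cb = tan t" and e2: "ca - cb = - cot t" by (simp_all add: ca_def cb_def field_simps)
  obtain a b where u: "u = (a, b)" by fastforce
  have "ca *\<^sub>R u + cb *\<^sub>R P 0 u = ((ca + cb) *\<^sub>R a, (ca - cb) *\<^sub>R b)"
    by (simp add: u Pmap_def scaleR_add_left scaleR_diff_left)
  then show ?thesis by (simp add: e1 e2 u Qmap_def)
qed

lemma Mxy:
  assumes "(x, y) \<in> Mplus E m t"
  shows "x \<bullet> x = cos t ^ 2" "y \<bullet> y = sin t ^ 2" "x \<bullet> y = 0"
    "\<And>k. k \<in> {1..m-1} \<Longrightarrow> x \<bullet> (E k *v y) = 0"
  using assms by (auto simp: Mplus_def power2_norm_eq_inner[symmetric])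

lemma zz: "z \<in> Mplus E m t \<Longrightarrow> z \<bullet> z = 1"
  using M_eq by (auto simp: norm_eq_1)

lemma zQ: "z \<in> Mplus E m t \<Longrightarrow> i \<le> m \<Longrightarrow> z \<bullet> Q i z = 0"
  using M_eq by auto

lemma zP: "z \<in> Mplus E m t \<Longrightarrow> 1 \<le> i \<Longrightarrow> i \<le> m \<Longrightarrow> z \<bullet> P i z = 0"
  using zQ[of z i] Q_P[of i] by simp

lemma Q0z_norm: "z \<in> Mplus E m t \<Longrightarrow> Q 0 z \<bullet> Q 0 z = 1"
proof -
  assume z: "z \<in> Mplus E m t"
  obtain x y where zxy: "z = (x, y)" by fastforce
  have "Q 0 z \<bullet> Q 0 z = tan t ^ 2 * (x \<bullet> x) + cot t ^ 2 * (y \<bullet> y)"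
    by (simp add: zxy Qmap_def power2_eq_square)
  also have "\<dots> = sin t ^ 2 + cos t ^ 2"
    using Mxy[of x y] z zxy sinpos cospos by (simp add: tan_eq cot_eq power_divide)
  finally show ?thesis by simp
qed

lemma QQ: "z \<in> Mplus E m t \<Longrightarrow> i \<le> m \<Longrightarrow> j \<le> m \<Longrightarrow> Q i z \<bullet> Q j z = (if i = j then 1 else 0)"
proof -
  assume z: "z \<in> Mplus E m t" and i: "i \<le> m" and j: "j \<le> m"
  have c0: "Q 0 z \<bullet> Q k z = 0" if k: "1 \<le> k" "k \<le> m" for k
  proof -
    have "Q 0 z \<bullet> Q k z = ca * (z \<bullet> P k z) + cb * (P 0 z \<bullet> P k z)"
      using k Q_P[of k] by (simp add: Q0_eq inner_add_left)
    also have "P 0 z \<bullet> P k z = z \<bullet> P 0 (P k z)" using P_sym[of 0] by simp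
    also have "\<dots> = 0" using P_skew2[of 0 k z] k by simp
    finally show ?thesis using zP[OF z k] by simp
  qed
  show ?thesis
  proof (cases "i = 0")
    case True
    show ?thesis
    proof (cases "j = 0")
      case True then show ?thesis using \<open>i = 0\<close> Q0z_norm[OF z] by simp
    next
      case False then show ?thesis using \<open>i = 0\<close> c0[of j] j by simp
    qed
  next
    case False
    show ?thesis
    proof (cases "j = 0")
      case True then show ?thesis using \<open>i \<noteq> 0\<close> c0[of i] i by (simp add: inner_commute)
    next
      case False
      have "Q i z \<bullet> Q j z = z \<bullet> P i (P j z)" using Q_P \<open>i \<noteq> 0\<close> False P_sym[OF i] by simp
      also have "\<dots> = (if i = j then 1 else 0)"
        using P_inv[OF i, of z] P_skew2[OF i j, of z] zz[OF z] by auto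
      finally show ?thesis .
    qed
  qed
qed

lemma triple:
  assumes z: "z \<in> Mplus E m t" and a: "1 \<le> a" "a \<le> m" and b: "b \<le> m" "b \<noteq> a"
    and c: "c \<le> m" "c \<noteq> a"
  shows "Q b z \<bullet> P a (Q c z) = 0"
proof -
  have base: "Q 0 z \<bullet> P a (Q k z) = 0" if k: "k \<le> m" "k \<noteq> a" for k
  proof (cases "k = 0")
    case True
    have "Q 0 z \<bullet> P a (Q 0 z) = ca * ca * (z \<bullet> P a z) + ca * cb * (z \<bullet> P a (P 0 z))
        + cb * ca * (P 0 z \<bullet> P a z) + cb * cb * (P 0 z \<bullet> P a (P 0 z))"
      by (simp add: Q0_eq P_add P_scale inner_add_left inner_add_right algebra_simps)
    also have "P 0 z \<bullet> P a z = z \<bullet> P 0 (P a z)" using P_sym[of 0] by simp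
    also have "P 0 z \<bullet> P a (P 0 z) = z \<bullet> P 0 (P a (P 0 z))" using P_sym[of 0] by simp
    also have "P 0 (P a (P 0 z)) = - P a z"
      using P_anti[of 0 a] a P_inv[of 0] P_neg by (metis le0 not_one_le_zero)
    finally show ?thesis
      using zP[OF z a] P_skew2[of a 0 z] P_skew2[of 0 a z] a True by auto
  next
    case False
    have "Q 0 z \<bullet> P a (Q k z) = ca * (z \<bullet> P a (P k z)) + cb * (P 0 z \<bullet> P a (P k z))"
      using False Q_P[of k] by (simp add: Q0_eq inner_add_left)
    also have "P 0 z \<bullet> P a (P k z) = z \<bullet> P 0 (P a (P k z))" using P_sym[of 0] by simp
    finally show ?thesis
      using P_skew2[of a k z] P_skew3[of 0 a k z] a k False by auto
  qed
  have symm: "Q b z \<bullet> P a (Q c z) = Q c z \<bullet> P a (Q b z)"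
    using P_sym[OF a(2)] by (simp add: inner_commute)
  show ?thesis
  proof (cases "b = 0")
    case True then show ?thesis using base c by simp
  next
    case bF: False
    show ?thesis
    proof (cases "c = 0")
      case True then show ?thesis using base b symm by simp
    next
      case cF: False
      have "Q b z \<bullet> P a (Q c z) = z \<bullet> P b (P a (P c z))"
        using Q_P bF cF P_sym[OF b(1)] by simp
      also have "\<dots> = 0"
      proof (cases "b = c")
        case True
        have "P b (P a (P b z)) = - P a z"
          using P_anti[of b a] a b P_inv[of b] P_neg True by metis
        then show ?thesis using True zP[OF z a] by simp
      next
        case False then show ?thesis using P_skew3[of b a c z] a b c by auto
      qed
      finally show ?thesis .
    qed
  qed
qed

end

lemma NL:
  fixes f :: "real \<Rightarrow> 'a::real_inner"
  assumes f: "(f has_vector_derivative f') (at 0)" and r: "norm (f 0) = r" "r > 0"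
    and o: "f 0 \<bullet> f' = 0"
  shows "((\<lambda>s. (r / norm (f s)) *\<^sub>R f s) has_vector_derivative f') (at 0)"
proof -
  have f0: "f 0 \<noteq> 0" using r by auto
  have fd: "(f has_derivative (\<lambda>h. h *\<^sub>R f')) (at 0)" using f by (simp add: has_vector_derivative_def)
  have nd: "((\<lambda>s. norm (f s)) has_derivative (\<lambda>h. (h *\<^sub>R f') \<bullet> sgn (f 0))) (at 0)"
    using has_derivative_compose[OF fd has_derivative_norm[OF f0]] by simp
  have gd: "((\<lambda>s. r / norm (f s)) has_derivative
      (\<lambda>h. - r * (inverse (norm (f 0)) * ((h *\<^sub>R f') \<bullet> sgn (f 0)) * inverse (norm (f 0))) + 0 / norm (f 0))) (at 0)"
    by (rule has_derivative_divide[OF has_derivative_const nd]) (use f0 in simp)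
  have "((\<lambda>s. (r / norm (f s)) *\<^sub>R f s) has_derivative
      (\<lambda>h. (r / norm (f 0)) *\<^sub>R (h *\<^sub>R f') + (- r * (inverse (norm (f 0)) * ((h *\<^sub>R f') \<bullet> sgn (f 0)) * inverse (norm (f 0))) + 0 / norm (f 0)) *\<^sub>R f 0)) (at 0)"
    by (rule has_derivative_scaleR[OF gd fd])
  moreover have "(\<lambda>h. (r / norm (f 0)) *\<^sub>R (h *\<^sub>R f') + (- r * (inverse (norm (f 0)) * ((h *\<^sub>R f') \<bullet> sgn (f 0)) * inverse (norm (f 0))) + 0 / norm (f 0)) *\<^sub>R f 0) = (\<lambda>h. h *\<^sub>R f')"
    using r o by (auto simp: sgn_div_norm inner_commute)
  ultimately show ?thesis by (simp add: has_vector_derivative_def)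
qed

context CS begin

definition "Eh j = (if j = 0 then mat 1 else E j)"

lemma Eh_frame:
  assumes j: "j < m" and k: "k < m"
  shows "(Eh j *v v) \<bullet> (Eh k *v v) = (if j = k then v \<bullet> v else 0)"
proof (cases "j = 0")
  case True
  show ?thesis
  proof (cases "k = 0")
    case False
    then have k1: "k \<in> {1..m-1}" using k by auto
    have "v \<bullet> (E k *v v) = - ((E k *v v) \<bullet> v)" by (rule Eskew'[OF k1])
    then have "v \<bullet> (E k *v v) = 0" by (simp add: inner_commute)
    then show ?thesis using True False by (simp add: Eh_def)
  qed (use True in \<open>simp add: Eh_def\<close>)
next
  case jF: False
  then have j1: "j \<in> {1..m-1}" using j by auto
  show ?thesis
  proof (cases "k = 0")
    case True
    have "v \<bullet> (E j *v v) = - ((E j *v v) \<bullet> v)" by (rule Eskew'[OF j1])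
    then have "(E j *v v) \<bullet> v = 0" by (simp add: inner_commute)
    then show ?thesis using True jF by (simp add: Eh_def)
  next
    case kF: False
    then have k1: "k \<in> {1..m-1}" using k by auto
    show ?thesis
    proof (cases "j = k")
      case True
      have "(E j *v v) \<bullet> (E j *v v) = - (v \<bullet> (E j *v (E j *v v)))" by (rule Eskew[OF j1])
      then show ?thesis using True jF Esq[OF j1, of v] by (simp add: Eh_def)
    next
      case False
      have a: "(E j *v v) \<bullet> (E k *v v) = - (v \<bullet> (E j *v (E k *v v)))" by (rule Eskew[OF j1])
      have b: "(E k *v v) \<bullet> (E j *v v) = - (v \<bullet> (E k *v (E j *v v)))" by (rule Eskew[OF k1])
      have c: "E j *v (E k *v v) = - (E k *v (E j *v v))" using Eanti[OF j1 k1 False] .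
      have "(E j *v v) \<bullet> (E k *v v) = 0" using a b c by (simp add: inner_commute)
      then show ?thesis using False jF kF by (simp add: Eh_def)
    qed
  qed
qed

lemma proj_orth:
  assumes Y: "Y \<bullet> Y = sin t ^ 2" and j: "j < m"
  shows "(u - (\<Sum>i<m. ((u \<bullet> (Eh i *v Y)) / sin t ^ 2) *\<^sub>R (Eh i *v Y))) \<bullet> (Eh j *v Y) = 0"
proof -
  have "(\<Sum>i<m. ((u \<bullet> (Eh i *v Y)) / sin t ^ 2) *\<^sub>R (Eh i *v Y)) \<bullet> (Eh j *v Y)
      = (\<Sum>i<m. ((u \<bullet> (Eh i *v Y)) / sin t ^ 2) * (if i = j then Y \<bullet> Y else 0))"
    by (simp add: inner_sum_left Eh_frame j)
  also have "\<dots> = (u \<bullet> (Eh j *v Y))"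
    using j Y sinpos by (simp add: if_distrib[of "\<lambda>x. _ * x"] sum.delta cong: if_cong)
  finally show ?thesis by (simp add: inner_diff_left)
qed

lemma curve:
  assumes z: "(x, y) \<in> Mplus E m t"
    and c1: "x \<bullet> x' = 0" and c2: "y \<bullet> y' = 0"
    and cj: "\<And>j. j < m \<Longrightarrow> x' \<bullet> (Eh j *v y) + x \<bullet> (Eh j *v y') = 0"
  shows "(x', y') \<in> tangent_space (Mplus E m t) (x, y)"
proof -
  have xx: "x \<bullet> x = cos t ^ 2" and yy: "y \<bullet> y = sin t ^ 2" and xy: "x \<bullet> y = 0"
    and xE: "\<And>k. k \<in> {1..m-1} \<Longrightarrow> x \<bullet> (E k *v y) = 0" using Mxy[OF z] by auto
  have xj: "x \<bullet> (Eh j *v y) = 0" if "j < m" for j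
    using that xy xE[of j] by (cases "j = 0") (auto simp: Eh_def)
  have ny: "norm y = sin t" using yy sinpos by (simp add: norm_eq_sqrt_inner)
  have nx: "norm x = cos t" using xx cospos by (simp add: norm_eq_sqrt_inner)
  define Yc where "Yc s = (sin t / norm (y + s *\<^sub>R y')) *\<^sub>R (y + s *\<^sub>R y')" for s
  define p where "p s = (x + s *\<^sub>R x') - (\<Sum>i<m. (((x + s *\<^sub>R x') \<bullet> (Eh i *v Yc s)) / sin t ^ 2) *\<^sub>R (Eh i *v Yc s))" for s
  define Xc where "Xc s = (cos t / norm (p s)) *\<^sub>R p s" for s
  have Y0: "Yc 0 = y" using ny sinpos by (simp add: Yc_def)
  have p0: "p 0 = x" using xj by (simp add: p_def Y0)
  have X0: "Xc 0 = x" using nx cospos by (simp add: Xc_def p0)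
  have dlin: "((\<lambda>s. y + s *\<^sub>R y') has_vector_derivative y') (at 0)"
    by (auto simp: has_vector_derivative_def intro!: derivative_eq_intros)
  have dY: "(Yc has_vector_derivative y') (at 0)"
    unfolding Yc_def using NL[OF dlin] ny sinpos c2 by simp
  then have dYd: "(Yc has_derivative (\<lambda>h. h *\<^sub>R y')) (at 0)" by (simp add: has_vector_derivative_def)
  have de: "((\<lambda>s. Eh j *v Yc s) has_derivative (\<lambda>h. h *\<^sub>R (Eh j *v y'))) (at 0)" for j
    using bounded_linear.has_derivative[OF matrix_vector_mul_bounded_linear dYd, of "Eh j"]
    by (simp add: matrix_vector_mult_scaleR)
  have du: "((\<lambda>s. x + s *\<^sub>R x') has_derivative (\<lambda>h. h *\<^sub>R x')) (at 0)"
    by (auto intro!: derivative_eq_intros)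
  have dp: "(p has_derivative (\<lambda>h. h *\<^sub>R x')) (at 0)"
  proof -
    let ?S = "sin t ^ 2"
    have S0: "?S \<noteq> 0" using sinpos by simp
    have di: "((\<lambda>s. (((x + s *\<^sub>R x') \<bullet> (Eh i *v Yc s)) / ?S) *\<^sub>R (Eh i *v Yc s)) has_derivative (\<lambda>h. 0)) (at 0)"
      if i: "i \<in> {..<m}" for i
    proof -
      have dI: "((\<lambda>s. (x + s *\<^sub>R x') \<bullet> (Eh i *v Yc s)) has_derivative
          (\<lambda>h. (x + 0 *\<^sub>R x') \<bullet> (h *\<^sub>R (Eh i *v y')) + (h *\<^sub>R x') \<bullet> (Eh i *v Yc 0))) (at 0)"
        by (rule has_derivative_inner[OF du de])
      have dD: "((\<lambda>s. ((x + s *\<^sub>R x') \<bullet> (Eh i *v Yc s)) / ?S) has_derivative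
          (\<lambda>h. (((x + 0 *\<^sub>R x') \<bullet> (h *\<^sub>R (Eh i *v y')) + (h *\<^sub>R x') \<bullet> (Eh i *v Yc 0)) * ?S
              - ((x + 0 *\<^sub>R x') \<bullet> (Eh i *v Yc 0)) * 0) / (?S * ?S))) (at 0)"
        by (rule has_derivative_divide'[OF dI has_derivative_const S0])
      have "((\<lambda>s. (((x + s *\<^sub>R x') \<bullet> (Eh i *v Yc s)) / ?S) *\<^sub>R (Eh i *v Yc s)) has_derivative
          (\<lambda>h. (((x + 0 *\<^sub>R x') \<bullet> (Eh i *v Yc 0)) / ?S) *\<^sub>R (h *\<^sub>R (Eh i *v y')) +
               ((((x + 0 *\<^sub>R x') \<bullet> (h *\<^sub>R (Eh i *v y')) + (h *\<^sub>R x') \<bullet> (Eh i *v Yc 0)) * ?S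
              - ((x + 0 *\<^sub>R x') \<bullet> (Eh i *v Yc 0)) * 0) / (?S * ?S)) *\<^sub>R (Eh i *v Yc 0))) (at 0)"
        by (rule has_derivative_scaleR[OF dD de])
      moreover have "x \<bullet> (Eh i *v y') = - (x' \<bullet> (Eh i *v y))" using cj[of i] i by simp
      ultimately show ?thesis using xj[of i] i by (simp add: Y0)
    qed
    have "(p has_derivative (\<lambda>h. h *\<^sub>R x' - (\<Sum>i<m. 0))) (at 0)"
      unfolding p_def by (rule has_derivative_diff[OF du has_derivative_sum]) (rule di)
    then show ?thesis by simp
  qed
  have dX: "(Xc has_vector_derivative x') (at 0)"
    unfolding Xc_def using NL[of p x' "cos t"] dp p0 nx cospos c1 by (simp add: has_vector_derivative_def)
  have dG: "((\<lambda>s. (Xc s, Yc s)) has_vector_derivative (x', y')) (at 0)"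
    by (rule has_vector_derivative_Pair[OF dX dY])
  have "continuous (at 0) p" using has_derivative_continuous[OF dp] .
  then obtain e where e: "e > 0" "\<And>s. dist s 0 < e \<Longrightarrow> dist (p s) (p 0) < norm x"
    unfolding continuous_at_eps_delta using nx cospos by (metis dist_commute)
  have pnz: "p s \<noteq> 0" if "dist s 0 < e" for s
    using e(2)[OF that] p0 by auto
  have mem: "(Xc s, Yc s) \<in> Mplus E m t" if s: "dist s 0 < e" for s
  proof -
    have ynz: "(y + s *\<^sub>R y') \<bullet> (y + s *\<^sub>R y') > 0"
    proof -
      have "(y + s *\<^sub>R y') \<bullet> (y + s *\<^sub>R y') = y \<bullet> y + (s * s) * (y' \<bullet> y')"
        using c2 by (simp add: inner_add_left inner_add_right inner_commute)
      moreover have "0 \<le> s * s * (y' \<bullet> y')" by (rule mult_nonneg_nonneg[OF zero_le_square inner_ge_zero])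
      moreover have "0 < (sin t) ^ 2" using sinpos by simp
      ultimately show ?thesis using yy by linarith
    qed
    then have "y + s *\<^sub>R y' \<noteq> 0" by auto
    then have nY: "norm (Yc s) = sin t" using sinpos by (simp add: Yc_def)
    then have YY: "Yc s \<bullet> Yc s = sin t ^ 2" by (simp add: power2_norm_eq_inner[symmetric])
    have nX: "norm (Xc s) = cos t" using pnz[OF s] cospos by (simp add: Xc_def)
    have po: "p s \<bullet> (Eh j *v Yc s) = 0" if "j < m" for j
      unfolding p_def by (rule proj_orth[OF YY that])
    have "Xc s \<bullet> Yc s = 0" using po[of 0] m_pos by (simp add: Xc_def Eh_def)
    moreover have "\<forall>k\<in>{1..m-1}. Xc s \<bullet> (E k *v Yc s) = 0"
    proof
      fix k assume "k \<in> {1..m-1}"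
      then have "k < m" "k \<noteq> 0" by auto
      then show "Xc s \<bullet> (E k *v Yc s) = 0" using po[of k] by (simp add: Xc_def Eh_def)
    qed
    ultimately show ?thesis using nX nY by (simp add: Mplus_def)
  qed
  show ?thesis
    unfolding tangent_space_def
  proof (intro CollectI exI conjI)
    show "e > 0" by (rule e(1))
    show "\<forall>s\<in>{-e<..<e}. (Xc s, Yc s) \<in> Mplus E m t"
      using mem by (auto simp: dist_real_def)
    show "(\<lambda>s. (Xc s, Yc s)) 0 = (x, y)" using X0 Y0 by simp
    show "((\<lambda>s. (Xc s, Yc s)) has_vector_derivative (x', y')) (at 0)" by (rule dG)
  qed
qed

end

lemma G_indep3:
  fixes p q r :: "'a::real_inner"
  assumes "p \<bullet> q = 0" "p \<bullet> r = 0" "q \<bullet> r = 0" "p + q + r = 0"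
  shows "p = 0 \<and> q = 0 \<and> r = 0"
proof -
  have e: "r = - p - q" using assms(4) by (simp add: algebra_simps eq_neg_iff_add_eq_0)
  have "p \<bullet> p = 0" using assms(1,2) by (simp add: e inner_diff_right)
  moreover have "q \<bullet> q = 0" using assms(1,3) by (simp add: e inner_diff_right inner_commute)
  ultimately show ?thesis using assms(4) by simp
qed

lemma loc_const_deriv:
  fixes h :: "real \<Rightarrow> real"
  assumes h: "(h has_derivative h') (at 0)" and e: "e > 0" and c: "\<forall>s\<in>{-e<..<e}. h s = c"
  shows "h' 1 = 0"
proof -
  have "((\<lambda>s. c) has_derivative (\<lambda>_. 0)) (at 0)" by simp
  moreover have "open {-e<..<e}" by simp
  moreover have "(0::real) \<in> {-e<..<e}" using e by simp
  ultimately have "(h has_derivative (\<lambda>_. 0)) (at 0)"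
    using has_derivative_transform_within_open[of "\<lambda>s. c" "\<lambda>_. 0" 0 UNIV "{-e<..<e}" h] c by auto
  then have "h' = (\<lambda>_. 0)" using has_derivative_unique h by blast
  then show ?thesis by simp
qed

context CS begin

lemma Q_sym: "i \<le> m \<Longrightarrow> Q i u \<bullet> v = u \<bullet> Q i v"
proof (cases "i = 0")
  case True
  obtain u1 u2 where u: "u = (u1, u2)" by fastforce
  obtain v1 v2 where v: "v = (v1, v2)" by fastforce
  show ?thesis using True by (simp add: u v Qmap_def)
next
  case False
  assume "i \<le> m"
  then show ?thesis using False Q_P P_sym by simp
qed

lemma Q_bl: "bounded_linear (Q i)"
  using Q_lin linear_conv_bounded_linear by blast

definition "Tl z = {w. w \<bullet> z = 0 \<and> (\<forall>i\<in>{0..m}. w \<bullet> Q i z = 0)}"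

lemma Tl_subspace: "subspace (Tl z)"
  by (auto simp: subspace_def Tl_def inner_add_left)

lemma tangent_sub: assumes z: "z \<in> Mplus E m t" shows "tangent_space (Mplus E m t) z \<subseteq> Tl z"
proof
  fix v assume "v \<in> tangent_space (Mplus E m t) z"
  then obtain \<gamma> e where e: "e > 0" and g: "\<forall>s\<in>{-e<..<e}. \<gamma> s \<in> Mplus E m t" and g0: "\<gamma> 0 = z"
    and dg: "(\<gamma> has_vector_derivative v) (at 0)" by (auto simp: tangent_space_def)
  have dgd: "(\<gamma> has_derivative (\<lambda>h. h *\<^sub>R v)) (at 0)" using dg by (simp add: has_vector_derivative_def)
  have "v \<bullet> z = 0"
  proof -
    have d: "((\<lambda>s. \<gamma> s \<bullet> \<gamma> s) has_derivative (\<lambda>h. \<gamma> 0 \<bullet> (h *\<^sub>R v) + (h *\<^sub>R v) \<bullet> \<gamma> 0)) (at 0)"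
      by (rule has_derivative_inner[OF dgd dgd])
    have "\<forall>s\<in>{-e<..<e}. \<gamma> s \<bullet> \<gamma> s = 1" using g zz by blast
    from loc_const_deriv[OF d e this] show ?thesis using g0 by (simp add: inner_commute)
  qed
  moreover have "v \<bullet> Q i z = 0" if i: "i \<in> {0..m}" for i
  proof -
    have dq: "((\<lambda>s. Q i (\<gamma> s)) has_derivative (\<lambda>h. Q i (h *\<^sub>R v))) (at 0)"
      by (rule bounded_linear.has_derivative[OF Q_bl dgd])
    have d: "((\<lambda>s. \<gamma> s \<bullet> Q i (\<gamma> s)) has_derivative (\<lambda>h. \<gamma> 0 \<bullet> Q i (h *\<^sub>R v) + (h *\<^sub>R v) \<bullet> Q i (\<gamma> 0))) (at 0)"
      by (rule has_derivative_inner[OF dgd dq])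
    have "\<forall>s\<in>{-e<..<e}. \<gamma> s \<bullet> Q i (\<gamma> s) = 0" using g zQ i by auto
    from loc_const_deriv[OF d e this] have "z \<bullet> Q i v + v \<bullet> Q i z = 0" using g0 by simp
    moreover have "z \<bullet> Q i v = v \<bullet> Q i z" using Q_sym[of i z v] i by (simp add: inner_commute)
    ultimately show ?thesis by simp
  qed
  ultimately show "v \<in> Tl z" by (simp add: Tl_def)
qed

lemma tangent_sup: assumes z: "z \<in> Mplus E m t" shows "Tl z \<subseteq> tangent_space (Mplus E m t) z"
proof
  fix w assume w: "w \<in> Tl z"
  obtain x y where zxy: "z = (x, y)" by fastforce
  obtain x' y' where wxy: "w = (x', y')" by fastforce
  have zM: "(x, y) \<in> Mplus E m t" using z zxy by simp
  have a: "x' \<bullet> x + y' \<bullet> y = 0" using w by (simp add: Tl_def zxy wxy)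
  have "w \<bullet> Q 0 z = 0" using w by (simp add: Tl_def)
  then have b: "tan t * (x' \<bullet> x) - cot t * (y' \<bullet> y) = 0" by (simp add: zxy wxy Qmap_def)
  have "(tan t + cot t) * (y' \<bullet> y) = 0" using a b by (simp add: algebra_simps) (metis add.commute add_eq_0_iff minus_mult_right)
  then have c2: "y \<bullet> y' = 0" using tanpos cotpos by (simp add: inner_commute)
  then have c1: "x \<bullet> x' = 0" using a by (simp add: inner_commute)
  have cj: "x' \<bullet> (Eh j *v y) + x \<bullet> (Eh j *v y') = 0" if j: "j < m" for j
  proof (cases "j = 0")
    case True
    have "w \<bullet> Q 1 z = 0" using w m_pos by (simp add: Tl_def)
    then show ?thesis using True by (simp add: zxy wxy Qmap_def Pmap_def Eh_def inner_commute)
  next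
    case False
    then have j1: "j \<in> {1..m-1}" using j by auto
    have "w \<bullet> Q (j+1) z = 0" using w j by (simp add: Tl_def)
    moreover have "x \<bullet> (E j *v y') = - ((E j *v x) \<bullet> y')" by (rule Eskew'[OF j1])
    ultimately show ?thesis using False by (simp add: zxy wxy Qmap_def Pmap_def Eh_def inner_commute)
  qed
  show "w \<in> tangent_space (Mplus E m t) z" using curve[OF zM c1 c2 cj] zxy wxy by simp
qed

lemma tangent_eq: "z \<in> Mplus E m t \<Longrightarrow> tangent_space (Mplus E m t) z = Tl z"
  using tangent_sub tangent_sup by blast

end

context CS begin

lemma normal_eq:
  assumes z: "z \<in> Mplus E m t"
  shows "normal_space_sphere (Mplus E m t) z = span ((\<lambda>\<alpha>. Q \<alpha> z) ` {0..m})"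
proof -
  let ?N = "{v. v \<bullet> z = 0 \<and> (\<forall>w\<in>Tl z. v \<bullet> w = 0)}"
  have NN: "normal_space_sphere (Mplus E m t) z = ?N"
    by (simp add: normal_space_sphere_def tangent_eq[OF z])
  have sN: "subspace ?N" by (auto simp: subspace_def inner_add_left)
  have sub: "span ((\<lambda>\<alpha>. Q \<alpha> z) ` {0..m}) \<subseteq> ?N"
  proof (rule span_minimal[OF _ sN])
    show "(\<lambda>\<alpha>. Q \<alpha> z) ` {0..m} \<subseteq> ?N"
      using zQ[OF z] by (auto simp: Tl_def inner_commute)
  qed
  have "?N \<subseteq> span ((\<lambda>\<alpha>. Q \<alpha> z) ` {0..m})"
  proof
    fix v assume v: "v \<in> ?N"
    obtain u n where u: "u \<in> span ((\<lambda>\<alpha>. Q \<alpha> z) ` {0..m})"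
      and n: "\<And>w. w \<in> span ((\<lambda>\<alpha>. Q \<alpha> z) ` {0..m}) \<Longrightarrow> orthogonal n w" and vun: "v = u + n"
      using orthogonal_subspace_decomp_exists[of "(\<lambda>\<alpha>. Q \<alpha> z) ` {0..m}" v] by metis
    have uN: "u \<in> ?N" using u sub by blast
    have "n \<in> Tl z"
    proof -
      have "n \<bullet> z = 0" using v uN vun by (simp add: inner_diff_left[of v u z, symmetric] algebra_simps)
      moreover have "\<forall>i\<in>{0..m}. n \<bullet> Q i z = 0"
      proof
        fix i assume "i \<in> {0..m}"
        then have "Q i z \<in> span ((\<lambda>\<alpha>. Q \<alpha> z) ` {0..m})" by (intro span_base) auto
        then show "n \<bullet> Q i z = 0" using n unfolding orthogonal_def by blast
      qed
      ultimately show ?thesis by (simp add: Tl_def)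
    qed
    then have "v \<bullet> n = 0" "u \<bullet> n = 0" using v uN by auto
    then have "n \<bullet> n = 0" using vun by (simp add: inner_add_left)
    then have "n = 0" by simp
    then show "v \<in> span ((\<lambda>\<alpha>. Q \<alpha> z) ` {0..m})" using u vun by simp
  qed
  then show ?thesis using sub NN by blast
qed

lemma dsum1:
  assumes z: "z \<in> Mplus E m t"
  shows "direct_sum3 UNIV (Tl z) (span ((\<lambda>\<alpha>. Q \<alpha> z) ` {0..m})) (span {z})"
proof -
  let ?S = "(\<lambda>\<alpha>. Q \<alpha> z) ` {0..m}"
  have Nperp: "b \<bullet> z = 0 \<and> (\<forall>w\<in>Tl z. b \<bullet> w = 0)" if "b \<in> span ?S" for b
  proof -
    have "b \<in> normal_space_sphere (Mplus E m t) z" using that normal_eq[OF z] by simp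
    then show ?thesis by (simp add: normal_space_sphere_def tangent_eq[OF z])
  qed
  have "UNIV \<subseteq> {a + b + c | a b c. a \<in> Tl z \<and> b \<in> span ?S \<and> c \<in> span {z}}"
  proof
    fix v :: "(real^'l) \<times> (real^'l)"
    obtain u n where u: "u \<in> span (insert z ?S)"
      and n: "\<And>w. w \<in> span (insert z ?S) \<Longrightarrow> orthogonal n w" and vun: "v = u + n"
      using orthogonal_subspace_decomp_exists[of "insert z ?S" v] by metis
    obtain k where k: "u - k *\<^sub>R z \<in> span ?S" using u span_breakdown_eq by blast
    have "n \<in> Tl z"
    proof -
      have "z \<in> span (insert z ?S)" by (intro span_base) auto
      then have "n \<bullet> z = 0" using n unfolding orthogonal_def by blast
      moreover have "\<forall>i\<in>{0..m}. n \<bullet> Q i z = 0"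
      proof
        fix i assume "i \<in> {0..m}"
        then have "Q i z \<in> span (insert z ?S)" by (intro span_base) auto
        then show "n \<bullet> Q i z = 0" using n unfolding orthogonal_def by blast
      qed
      ultimately show ?thesis by (simp add: Tl_def)
    qed
    moreover have "k *\<^sub>R z \<in> span {z}" by (simp add: span_base span_scale)
    moreover have "v = n + (u - k *\<^sub>R z) + k *\<^sub>R z" using vun by simp
    ultimately show "v \<in> {a + b + c | a b c. a \<in> Tl z \<and> b \<in> span ?S \<and> c \<in> span {z}}"
      using k by blast
  qed
  moreover have "a = 0 \<and> b = 0 \<and> c = 0"
    if H: "a \<in> Tl z" "b \<in> span ?S" "c \<in> span {z}" "a + b + c = 0" for a b c
  proof (rule G_indep3)
    obtain k where c: "c = k *\<^sub>R z" using H(3) by (auto simp: span_singleton)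
    show "a \<bullet> b = 0" using Nperp[OF H(2)] H(1) by (simp add: inner_commute)
    show "a \<bullet> c = 0" using H(1) c by (simp add: Tl_def)
    show "b \<bullet> c = 0" using Nperp[OF H(2)] c by simp
    show "a + b + c = 0" by fact
  qed
  ultimately show ?thesis unfolding direct_sum3_def by blast
qed

lemma dimT:
  assumes z: "z \<in> Mplus E m t"
  shows "dim (Tl z) + (m + 2) = 2 * CARD('l)"
proof -
  define h where "h i = (if i = Suc m then z else Q i z)" for i
  have "dim {y \<in> UNIV. \<forall>i\<in>{0..Suc m}. y \<bullet> h i = 0} + card {0..Suc m} = dim (UNIV :: ((real^'l) \<times> (real^'l)) set)"
  proof (rule G_perp_dim[where \<pi> = id])
    show "id (h i) \<bullet> id (h j) = 0" if "i \<in> {0..Suc m}" "j \<in> {0..Suc m}" "i \<noteq> j" for i j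
      using that QQ[OF z] zQ[OF z] by (auto simp: h_def inner_commute)
    show "id (h i) \<noteq> 0" if "i \<in> {0..Suc m}" for i
    proof
      assume "id (h i) = 0"
      then have "h i \<bullet> h i = 0" by simp
      then show False using that QQ[OF z, of i i] zz[OF z] by (auto simp: h_def split: if_splits)
    qed
  qed (auto simp: subspace_UNIV)
  moreover have "{y \<in> UNIV. \<forall>i\<in>{0..Suc m}. y \<bullet> h i = 0} = Tl z"
    by (auto simp: Tl_def h_def inner_commute)
  ultimately show ?thesis by simp
qed

end

lemma perp_span: "(\<And>g. g \<in> G \<Longrightarrow> p \<bullet> g = 0) \<Longrightarrow> q \<in> span G \<Longrightarrow> p \<bullet> (q::'a::euclidean_space) = 0"
  using orthogonal_to_span[of q G p] by (auto simp: orthogonal_def)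

lemma eig_subspace: "linear f \<Longrightarrow> subspace (eigenspace_in UNIV f c)"
  by (auto simp: subspace_def eigenspace_in_def linear_add linear_scale linear_0 algebra_simps)

lemma dim_range_inj:
  fixes f :: "real^'l \<Rightarrow> 'a::euclidean_space"
  assumes "linear f" "inj f"
  shows "dim (range f) = CARD('l)"
proof -
  have "dim (f ` UNIV) = dim (UNIV :: (real^'l) set)"
    by (rule dim_image_eq[OF assms(1)]) (use assms(2) in \<open>auto intro: inj_on_subset\<close>)
  then show ?thesis by simp
qed

context CS begin

lemma shape_eq:
  "z \<in> Mplus E m t \<Longrightarrow> shape_operator (Mplus E m t) (Q i) z X = - orth_proj (Tl z) (Q i X)"
proof -
  assume z: "z \<in> Mplus E m t"
  have "(Q i has_derivative Q i) (at z)" by (rule bounded_linear_imp_has_derivative[OF Q_bl])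
  then have "frechet_derivative (Q i) (at z) = Q i" using frechet_derivative_at by metis
  then show ?thesis by (simp add: shape_operator_def tangent_eq[OF z])
qed

lemma shape_add:
  "z \<in> Mplus E m t \<Longrightarrow> shape_operator (Mplus E m t) (Q i) z (u + v) =
     shape_operator (Mplus E m t) (Q i) z u + shape_operator (Mplus E m t) (Q i) z v"
  by (simp add: shape_eq linear_add[OF Q_lin] G_proj_add[OF Tl_subspace])

lemma dimB:
  assumes a: "a \<in> {1..m}" and s: "\<sigma> = 1 \<or> \<sigma> = -1"
  shows "dim (eigenspace_in UNIV (Q a) \<sigma>) = CARD('l)"
proof -
  have ss: "\<sigma> * \<sigma> = 1" using s by auto
  have a1: "a \<noteq> 0" using a by auto
  define L where "L u = (if a = 1 then \<sigma> *\<^sub>R u else - \<sigma> *\<^sub>R (E (a-1) *v u))" for u :: "real^'l"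
  have linL: "linear L" unfolding L_def
    by (rule linearI) (auto simp: matrix_vector_right_distrib matrix_vector_mult_scaleR algebra_simps)
  have lin: "linear (\<lambda>u. (u, L u))"
    by (rule linearI) (auto simp: linear_add[OF linL] linear_scale[OF linL])
  have inj: "inj (\<lambda>u. (u, L u))" by (rule injI) simp
  have "eigenspace_in UNIV (Q a) \<sigma> = range (\<lambda>u. (u, L u))"
  proof (intro set_eqI iffI)
    fix w assume w: "w \<in> eigenspace_in UNIV (Q a) \<sigma>"
    obtain u v where wuv: "w = (u, v)" by fastforce
    have ev: "Q a (u, v) = \<sigma> *\<^sub>R (u, v)" using w by (simp add: eigenspace_in_def wuv)
    show "w \<in> range (\<lambda>u. (u, L u))"
    proof (cases "a = 1")
      case True
      have "Q a (u, v) = (v, u)" using True by (simp add: Qmap_def Pmap_def)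
      then have "v = \<sigma> *\<^sub>R u" using ev by simp
      then show ?thesis using True by (auto simp: wuv L_def)
    next
      case False
      have "Q a (u, v) = (E (a-1) *v v, - (E (a-1) *v u))" using False a1 by (simp add: Qmap_def Pmap_def)
      then have "- (E (a-1) *v u) = \<sigma> *\<^sub>R v" using ev by simp
      then have "\<sigma> *\<^sub>R (- (E (a-1) *v u)) = v" using ss by (simp add: scaleR_scaleR)
      then have "v = L u" using False by (simp add: L_def)
      then show ?thesis by (auto simp: wuv)
    qed
  next
    fix w assume "w \<in> range (\<lambda>u. (u, L u))"
    then obtain u where wu: "w = (u, L u)" by auto
    show "w \<in> eigenspace_in UNIV (Q a) \<sigma>"
    proof (cases "a = 1")
      case True then show ?thesis using ss by (simp add: eigenspace_in_def wu Qmap_def Pmap_def L_def scaleR_scaleR)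
    next
      case False
      then have k: "a - 1 \<in> {1..m-1}" using a by auto
      have "E (a-1) *v L u = \<sigma> *\<^sub>R u" using False Esq[OF k, of u]
        by (simp add: L_def matrix_vector_mult_scaleR mv_neg)
      moreover have "- (E (a-1) *v u) = \<sigma> *\<^sub>R L u" using False ss by (simp add: L_def scaleR_scaleR)
      ultimately show ?thesis using False a by (simp add: eigenspace_in_def wu Qmap_def Pmap_def)
    qed
  qed
  then show ?thesis using dim_range_inj[OF lin inj] by simp
qed

lemma hfacts:
  assumes z: "z \<in> Mplus E m t" and a: "a \<in> {1..m}" and i: "i \<le> m" and j: "j \<le> m"
  defines "h \<equiv> \<lambda>b. if b = a then z else Q b z"
  shows "h i \<bullet> h j = (if i = j then 1 else 0)" and "h i \<bullet> Q a (h j) = 0"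
proof -
  have a1: "1 \<le> a" "a \<le> m" "a \<noteq> 0" using a by auto
  have Qa: "Q a = P a" using Q_P a1 by simp
  show "h i \<bullet> h j = (if i = j then 1 else 0)"
    using QQ[OF z i j] zQ[OF z i] zQ[OF z j] zz[OF z] by (auto simp: h_def inner_commute)
  show "h i \<bullet> Q a (h j) = 0"
  proof (cases "i = a")
    case True
    show ?thesis
    proof (cases "j = a")
      case True then show ?thesis using \<open>i = a\<close> zQ[OF z a1(2)] by (simp add: h_def)
    next
      case False
      have "z \<bullet> Q a (Q j z) = Q a z \<bullet> Q j z" using Q_sym[OF a1(2)] by simp
      then show ?thesis using True False QQ[OF z a1(2) j] by (simp add: h_def)
    qed
  next
    case False
    show ?thesis
    proof (cases "j = a")
      case True then show ?thesis using False QQ[OF z i a1(2)] by (simp add: h_def)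
    next
      case jF: False
      then show ?thesis using False triple[OF z a1(1,2) i False j jF] Qa by (simp add: h_def)
    qed
  qed
qed

lemma dimEp2:
  assumes z: "z \<in> Mplus E m t" and a: "a \<in> {1..m}" and s: "\<sigma> = 1 \<or> \<sigma> = -1"
  shows "dim (eigenspace_in UNIV (Q a) \<sigma> \<inter> Tl z) + (m + 1) = CARD('l)"
proof -
  have a1: "1 \<le> a" "a \<le> m" "a \<noteq> 0" using a by auto
  have ss: "\<sigma> * \<sigma> = 1" using s by auto
  define h where "h b = (if b = a then z else Q b z)" for b
  define \<pi> where "\<pi> v = (1/2) *\<^sub>R (v + \<sigma> *\<^sub>R Q a v)" for v
  let ?B = "eigenspace_in UNIV (Q a) \<sigma>"
  have Qinv: "Q a (Q a v) = v" for v using P_inv[OF a1(2)] Q_P[OF a1(3)] by simp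
  have QQs: "Q a u \<bullet> Q a v = u \<bullet> v" for u v using Q_sym[OF a1(2)] Qinv by metis
  have pinner: "\<pi> u \<bullet> \<pi> v = (1/2) * (u \<bullet> v + \<sigma> * (u \<bullet> Q a v))" for u v
  proof -
    have "\<pi> u \<bullet> \<pi> v = (1/4) * (u \<bullet> v + \<sigma> * (u \<bullet> Q a v) + \<sigma> * (Q a u \<bullet> v) + (\<sigma> * \<sigma>) * (Q a u \<bullet> Q a v))"
      by (simp add: \<pi>_def inner_add_left inner_add_right algebra_simps)
    also have "\<dots> = (1/2) * (u \<bullet> v + \<sigma> * (u \<bullet> Q a v))"
      using Q_sym[OF a1(2), of u v] QQs[of u v] ss by simp
    finally show ?thesis .
  qed
  have "dim {y \<in> ?B. \<forall>i\<in>{0..m}. y \<bullet> h i = 0} + card {0..m} = dim ?B"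
  proof (rule G_perp_dim)
    show "subspace ?B" by (rule eig_subspace[OF Q_lin])
    show "\<pi> v \<in> ?B" for v
      using ss by (simp add: eigenspace_in_def \<pi>_def linear_add[OF Q_lin] linear_scale[OF Q_lin] Qinv algebra_simps)
    show "y \<bullet> \<pi> v = y \<bullet> v" if "y \<in> ?B" for y v
    proof -
      have "y \<bullet> Q a v = \<sigma> * (y \<bullet> v)" using that Q_sym[OF a1(2), of y v] by (simp add: eigenspace_in_def)
      then show ?thesis using ss by (simp add: \<pi>_def inner_add_right)
    qed
    show "\<pi> (h i) \<bullet> \<pi> (h j) = 0" if "i \<in> {0..m}" "j \<in> {0..m}" "i \<noteq> j" for i j
    proof -
      have "h i \<bullet> h j = 0" "h i \<bullet> Q a (h j) = 0" using hfacts[OF z a, of i j] that by (simp_all add: h_def)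
      then show ?thesis using pinner[of "h i" "h j"] by simp
    qed
    show "\<pi> (h i) \<noteq> 0" if "i \<in> {0..m}" for i
    proof
      assume "\<pi> (h i) = 0"
      then have "\<pi> (h i) \<bullet> \<pi> (h i) = 0" by simp
      moreover have "h i \<bullet> h i = 1" "h i \<bullet> Q a (h i) = 0" using hfacts[OF z a, of i i] that by (simp_all add: h_def)
      ultimately show False using pinner[of "h i" "h i"] by simp
    qed
  qed simp
  moreover have "{y \<in> ?B. \<forall>i\<in>{0..m}. y \<bullet> h i = 0} = ?B \<inter> Tl z"
  proof (intro set_eqI iffI)
    fix y assume y: "y \<in> {y \<in> ?B. \<forall>i\<in>{0..m}. y \<bullet> h i = 0}"
    then have yz: "y \<bullet> z = 0" using a1 by (force simp: h_def)
    have "y \<bullet> Q i z = 0" if i: "i \<in> {0..m}" for i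
    proof (cases "i = a")
      case True
      have "y \<bullet> Q a z = Q a y \<bullet> z" using Q_sym[OF a1(2)] by simp
      then show ?thesis using y yz True by (simp add: eigenspace_in_def)
    next
      case False then show ?thesis using y i by (force simp: h_def)
    qed
    then show "y \<in> ?B \<inter> Tl z" using y yz by (simp add: Tl_def)
  next
    fix y assume "y \<in> ?B \<inter> Tl z"
    then show "y \<in> {y \<in> ?B. \<forall>i\<in>{0..m}. y \<bullet> h i = 0}" by (auto simp: Tl_def h_def)
  qed
  ultimately show ?thesis using dimB[OF a s] by simp
qed

end

context CS begin

lemma part2:
  assumes z: "z \<in> Mplus E m t" and a: "a \<in> {1..m}"
  defines "T \<equiv> Tl z"
    and "A \<equiv> shape_operator (Mplus E m t) (Q a) z"
    and "Pp \<equiv> eigenspace_in UNIV (Q a) (-1) \<inter> Tl z"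
    and "Z \<equiv> span ((\<lambda>b. Q a (Q b z)) ` ({0..m} - {a}))"
    and "N \<equiv> eigenspace_in UNIV (Q a) 1 \<inter> Tl z"
  shows "{c. \<exists>X\<in>T. X \<noteq> 0 \<and> A X = c *\<^sub>R X} \<subseteq> {1, 0, -1}"
    and "eigenspace_in T A 1 = Pp" and "eigenspace_in T A 0 = Z" and "eigenspace_in T A (-1) = N"
    and "direct_sum3 T Pp Z N"
    and "int (dim Pp) = int CARD('l) - int m - 1"
    and "int (dim Z) = int m"
    and "int (dim N) = int CARD('l) - int m - 1"
proof -
  have a1: "1 \<le> a" "a \<le> m" "a \<noteq> 0" using a by auto
  have Qinv: "Q a (Q a v) = v" for v using P_inv[OF a1(2)] Q_P[OF a1(3)] by simp
  have Qs: "Q a u \<bullet> v = u \<bullet> Q a v" for u v using Q_sym[OF a1(2)] by simp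
  have sT: "subspace T" unfolding T_def by (rule Tl_subspace)
  have sP: "subspace Pp" unfolding Pp_def by (rule subspace_inter[OF eig_subspace[OF Q_lin] Tl_subspace])
  have sN: "subspace N" unfolding N_def by (rule subspace_inter[OF eig_subspace[OF Q_lin] Tl_subspace])
  have sZ: "subspace Z" unfolding Z_def by simp
  have gT: "Q a (Q b z) \<in> Tl z" if b: "b \<in> {0..m} - {a}" for b
  proof -
    have b1: "b \<le> m" "b \<noteq> a" using b by auto
    have "Q a (Q b z) \<bullet> z = 0" using Qs QQ[OF z b1(1) a1(2)] b1 by simp
    moreover have "Q a (Q b z) \<bullet> Q i z = 0" if i: "i \<in> {0..m}" for i
    proof (cases "i = a")
      case True then show ?thesis using Qs[of "Q b z" "Q a z"] Qinv zQ[OF z b1(1)] by (simp add: inner_commute)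
    next
      case False
      have "Q a (Q b z) \<bullet> Q i z = Q b z \<bullet> P a (Q i z)" using Qs Q_P[OF a1(3)] by simp
      then show ?thesis using triple[OF z a1(1,2) b1(1) b1(2), of i] i False by simp
    qed
    ultimately show ?thesis by (simp add: Tl_def)
  qed
  have "(\<lambda>b. Q a (Q b z)) ` ({0..m} - {a}) \<subseteq> Tl z" using gT by blast
  then have subZ: "Z \<subseteq> T" unfolding Z_def T_def by (rule span_minimal[OF _ Tl_subspace])
  have subP: "Pp \<subseteq> T" and subN: "N \<subseteq> T" by (auto simp: Pp_def N_def T_def)
  have o1: "p \<bullet> q = 0" if "p \<in> Pp" "q \<in> Z" for p q
  proof (rule perp_span[OF _ that(2)[unfolded Z_def]])
    fix g assume "g \<in> (\<lambda>b. Q a (Q b z)) ` ({0..m} - {a})"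
    then obtain b where b: "b \<in> {0..m} - {a}" "g = Q a (Q b z)" by blast
    have "p \<bullet> g = Q a p \<bullet> Q b z" using Qs b by simp
    also have "\<dots> = 0" using that(1) b by (auto simp: Pp_def eigenspace_in_def Tl_def)
    finally show "p \<bullet> g = 0" .
  qed
  have o3: "q \<bullet> r = 0" if "q \<in> Z" "r \<in> N" for q r
  proof -
    have "r \<bullet> q = 0"
    proof (rule perp_span[OF _ that(1)[unfolded Z_def]])
      fix g assume "g \<in> (\<lambda>b. Q a (Q b z)) ` ({0..m} - {a})"
      then obtain b where b: "b \<in> {0..m} - {a}" "g = Q a (Q b z)" by blast
      have "r \<bullet> g = Q a r \<bullet> Q b z" using Qs b by simp
      also have "\<dots> = 0" using that(2) b by (auto simp: N_def eigenspace_in_def Tl_def)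
      finally show "r \<bullet> g = 0" .
    qed
    then show ?thesis by (simp add: inner_commute)
  qed
  have o2: "p \<bullet> r = 0" if "p \<in> Pp" "r \<in> N" for p r
  proof -
    have "p \<bullet> r = p \<bullet> Q a r" using that(2) by (simp add: N_def eigenspace_in_def)
    also have "\<dots> = Q a p \<bullet> r" using Qs by simp
    also have "\<dots> = - (p \<bullet> r)" using that(1) by (simp add: Pp_def eigenspace_in_def)
    finally show ?thesis by simp
  qed
  have dZ: "dim Z = m"
  proof -
    have "dim Z = card ({0..m} - {a})" unfolding Z_def
    proof (rule G_orth_dim)
      show "Q a (Q i z) \<bullet> Q a (Q j z) = 0" if "i \<in> {0..m} - {a}" "j \<in> {0..m} - {a}" "i \<noteq> j" for i j
        using Qs[of "Q i z" "Q a (Q j z)"] Qinv QQ[OF z, of i j] that by simp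
      show "Q a (Q i z) \<noteq> 0" if "i \<in> {0..m} - {a}" for i
      proof
        assume "Q a (Q i z) = 0"
        then have "Q a (Q a (Q i z)) = 0" using linear_0[OF Q_lin] by simp
        then show False using Qinv QQ[OF z, of i i] that by simp
      qed
    qed simp
    then show ?thesis using a1 by simp
  qed
  have dP: "dim Pp + (m + 1) = CARD('l)" unfolding Pp_def using dimEp2[OF z a] by simp
  have dN: "dim N + (m + 1) = CARD('l)" unfolding N_def using dimEp2[OF z a] by simp
  have dT: "dim T + (m + 2) = 2 * CARD('l)" unfolding T_def by (rule dimT[OF z])
  have d: "dim Pp + dim Z + dim N = dim T" using dP dN dT dZ by linarith
  have add: "A (u + v) = A u + A v" for u v unfolding A_def by (rule shape_add[OF z])
  have eP: "A p = 1 *\<^sub>R p" if "p \<in> Pp" for p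
  proof -
    have "Q a p = - p" "- p \<in> Tl z" using that by (auto simp: Pp_def eigenspace_in_def subspace_neg[OF Tl_subspace])
    then show ?thesis unfolding A_def using shape_eq[OF z] G_proj_in[OF Tl_subspace] by simp
  qed
  have eN: "A r = (-1) *\<^sub>R r" if "r \<in> N" for r
  proof -
    have "Q a r = r" "r \<in> Tl z" using that by (auto simp: N_def eigenspace_in_def)
    then show ?thesis unfolding A_def using shape_eq[OF z] G_proj_in[OF Tl_subspace] by simp
  qed
  have eZ: "A q = 0" if "q \<in> Z" for q
  proof -
    have "\<forall>w\<in>Tl z. Q a q \<bullet> w = 0"
    proof
      fix w assume w: "w \<in> Tl z"
      have "Q a w \<bullet> q = 0"
      proof (rule perp_span[OF _ that[unfolded Z_def]])
        fix g assume "g \<in> (\<lambda>b. Q a (Q b z)) ` ({0..m} - {a})"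
        then obtain b where b: "b \<in> {0..m} - {a}" "g = Q a (Q b z)" by blast
        have "Q a w \<bullet> g = w \<bullet> Q b z" using Qs Qinv b by metis
        then show "Q a w \<bullet> g = 0" using w b by (simp add: Tl_def)
      qed
      then show "Q a q \<bullet> w = 0" using Qs by (simp add: inner_commute)
    qed
    then show ?thesis unfolding A_def using shape_eq[OF z] G_proj_perp[OF Tl_subspace] by simp
  qed
  have cs: "(1::real) \<noteq> 0" "(-1::real) \<noteq> 0" "(1::real) \<noteq> -1" by simp_all
  note G = G_eigen[OF sT sP sZ sN subP subZ subN o1 o2 o3 d add eP eZ eN cs]
  show "{c. \<exists>X\<in>T. X \<noteq> 0 \<and> A X = c *\<^sub>R X} \<subseteq> {1, 0, -1}" using G(1) by simp
  show "eigenspace_in T A 1 = Pp" using G(2) by simp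
  show "eigenspace_in T A 0 = Z" using G(3) by simp
  show "eigenspace_in T A (-1) = N" using G(4) by simp
  show "direct_sum3 T Pp Z N" using G(5) by simp
  show "int (dim Pp) = int CARD('l) - int m - 1" using dP by linarith
  show "int (dim Z) = int m" using dZ by simp
  show "int (dim N) = int CARD('l) - int m - 1" using dN by linarith
qed

end

context CS begin

definition "Rm w = ((1 / tan t) *\<^sub>R fst w, - ((1 / cot t) *\<^sub>R snd w))"

lemma Q0_Rm: "Q 0 (Rm w) = w" and Rm_Q0: "Rm (Q 0 w) = w"
  using tanpos cotpos by (auto simp: Rm_def Qmap_def prod_eq_iff)

lemma inv_Q0: "inv (Q 0) = Rm"
  by (rule inv_equality) (simp_all add: Q0_Rm Rm_Q0)

definition "ra = (1 / tan t - 1 / cot t) / 2"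
definition "rb = (1 / tan t + 1 / cot t) / 2"

lemma Rm_eq: "Rm u = ra *\<^sub>R u + rb *\<^sub>R P 0 u"
proof -
  have e1: "ra + rb = 1 / tan t" and e2: "ra - rb = - (1 / cot t)" by (simp_all add: ra_def rb_def field_simps)
  obtain a b where u: "u = (a, b)" by fastforce
  have "ra *\<^sub>R u + rb *\<^sub>R P 0 u = ((ra + rb) *\<^sub>R a, (ra - rb) *\<^sub>R b)"
    by (simp add: u Pmap_def scaleR_add_left scaleR_diff_left)
  then show ?thesis by (simp add: e1 e2 u Rm_def)
qed

lemma Rm_lin: "linear Rm"
  by (rule linearI) (auto simp: Rm_def algebra_simps)

lemma Rm_sym: "Rm u \<bullet> v = u \<bullet> Rm v"
  by (cases u, cases v) (simp add: Rm_def)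

lemma zP0: "(x, y) \<in> Mplus E m t \<Longrightarrow> (x, y) \<bullet> P 0 (x, y) = cos t ^ 2 - sin t ^ 2"
  using Mxy[of x y] by (simp add: Pmap_def)

lemma RQ_Q:
  assumes z: "z \<in> Mplus E m t" and a: "a \<in> {1..m}" and b: "b \<in> {1..m}"
  shows "Rm (Q a z) \<bullet> Q b z = 0"
proof -
  have a1: "1 \<le> a" "a \<le> m" "a \<noteq> 0" and b1: "1 \<le> b" "b \<le> m" "b \<noteq> 0" using a b by auto
  have "Rm (Q a z) \<bullet> Q b z = ra * (P a z \<bullet> P b z) + rb * (P 0 (P a z) \<bullet> P b z)"
    using Q_P a1 b1 by (simp add: Rm_eq inner_add_left)
  also have "P 0 (P a z) \<bullet> P b z = z \<bullet> P a (P 0 (P b z))"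
    using P_sym[of 0] P_sym[OF a1(2)] by simp
  also have "P a z \<bullet> P b z = (if a = b then 1 else 0)" using QQ[OF z a1(2) b1(2)] Q_P a1 b1 by simp
  finally have eq: "Rm (Q a z) \<bullet> Q b z = ra * (if a = b then 1 else 0) + rb * (z \<bullet> P a (P 0 (P b z)))" .
  show ?thesis
  proof (cases "a = b")
    case True
    have "P a (P 0 (P a z)) = - P 0 z"
      using P_anti[of a 0] a1 P_inv[of a] P_neg by (metis le0)
    then have "Rm (Q a z) \<bullet> Q b z = ra - rb * (z \<bullet> P 0 z)" using eq True by simp
    moreover obtain x y where zxy: "z = (x, y)" by fastforce
    ultimately have "Rm (Q a z) \<bullet> Q b z = ra - rb * (cos t ^ 2 - sin t ^ 2)" using zP0 z by simp
    also have "\<dots> = 0"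
    proof -
      have s: "sin t \<noteq> 0" "cos t \<noteq> 0" using sinpos cospos by auto
      have "ra = (cos t ^ 2 - sin t ^ 2) / (2 * sin t * cos t)" "rb = 1 / (2 * sin t * cos t)"
        using s sc1 by (simp_all add: ra_def rb_def tan_eq cot_eq field_simps power2_eq_square)
      then show ?thesis by simp
    qed
    finally show ?thesis .
  next
    case False then show ?thesis using eq P_skew3[of a 0 b z] a1 b1 by simp
  qed
qed

lemma Q0_eigm: "eigenspace_in UNIV (Q 0) (- cot t) = range (\<lambda>v. (0::real^'l, v))"
proof (intro set_eqI iffI)
  fix w assume w: "w \<in> eigenspace_in UNIV (Q 0) (- cot t)"
  obtain u v where wuv: "w = (u, v)" by fastforce
  have "tan t *\<^sub>R u = - (cot t *\<^sub>R u)" using w by (simp add: eigenspace_in_def wuv Qmap_def)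
  then have "(tan t + cot t) *\<^sub>R u = 0" by (simp add: scaleR_add_left)
  then have "u = 0" using tanpos cotpos by simp
  then show "w \<in> range (\<lambda>v. (0::real^'l, v))" using wuv by simp
qed (auto simp: eigenspace_in_def Qmap_def)

lemma Q0_eigp: "eigenspace_in UNIV (Q 0) (tan t) = range (\<lambda>u. (u, 0::real^'l))"
proof (intro set_eqI iffI)
  fix w assume w: "w \<in> eigenspace_in UNIV (Q 0) (tan t)"
  obtain u v where wuv: "w = (u, v)" by fastforce
  have "- (cot t *\<^sub>R v) = tan t *\<^sub>R v" using w by (simp add: eigenspace_in_def wuv Qmap_def)
  then have "(tan t + cot t) *\<^sub>R v = 0" by (simp add: scaleR_add_left) (metis add.commute neg_eq_iff_add_eq_0)
  then have "v = 0" using tanpos cotpos by simp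
  then show "w \<in> range (\<lambda>u. (u, 0::real^'l))" using wuv by simp
qed (auto simp: eigenspace_in_def Qmap_def)

lemma dim_eigm: "dim (eigenspace_in UNIV (Q 0) (- cot t)) = CARD('l)"
  unfolding Q0_eigm by (rule dim_range_inj) (auto intro!: linearI injI)

lemma dim_eigp: "dim (eigenspace_in UNIV (Q 0) (tan t)) = CARD('l)"
  unfolding Q0_eigp by (rule dim_range_inj) (auto intro!: linearI injI)

lemma yEx:
  assumes z: "(x, y) \<in> Mplus E m t" and j: "j < m"
  shows "y \<bullet> (Eh j *v x) = 0" and "x \<bullet> (Eh j *v y) = 0"
proof -
  show "x \<bullet> (Eh j *v y) = 0"
    using Mxy[OF z] j by (cases "j = 0") (auto simp: Eh_def)
  show "y \<bullet> (Eh j *v x) = 0"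
  proof (cases "j = 0")
    case True then show ?thesis using Mxy[OF z] by (simp add: Eh_def inner_commute)
  next
    case False
    then have j1: "j \<in> {1..m-1}" using j by auto
    have "y \<bullet> (E j *v x) = - ((E j *v y) \<bullet> x)" by (rule Eskew'[OF j1])
    then show ?thesis using Mxy(4)[OF z j1] False by (simp add: Eh_def inner_commute)
  qed
qed

lemma snd_Qi: "i \<in> {1..m} \<Longrightarrow> snd (Q i (x, y)) = (if i = 1 then 1 else -1) *\<^sub>R (Eh (i-1) *v x)"
  by (auto simp: Qmap_def Pmap_def Eh_def)

lemma fst_Qi: "i \<in> {1..m} \<Longrightarrow> fst (Q i (x, y)) = Eh (i-1) *v y"
  by (auto simp: Qmap_def Pmap_def Eh_def)

lemma dimPp3:
  assumes z: "z \<in> Mplus E m t"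
  shows "dim (eigenspace_in UNIV (Q 0) (- cot t) \<inter> Tl z) + (m + 1) = CARD('l)"
proof -
  obtain x y where zxy: "z = (x, y)" by fastforce
  have zM: "(x, y) \<in> Mplus E m t" using z zxy by simp
  note M = Mxy[OF zM]
  let ?B = "eigenspace_in UNIV (Q 0) (- cot t)"
  define h where "h i = (if i = 0 then z else Q i z)" for i
  define \<pi> where "\<pi> w = (0::real^'l, snd w)" for w :: "(real^'l) \<times> (real^'l)"
  define f where "f i = (if i = 0 then y else (if i = 1 then 1 else -1) *\<^sub>R (Eh (i-1) *v x))" for i
  have pf: "\<pi> (h i) = (0, f i)" if "i \<in> {0..m}" for i
    using that snd_Qi[of i x y] by (auto simp: \<pi>_def h_def f_def zxy)
  have ff: "f i \<bullet> f j = (if i = j then (if i = 0 then sin t ^ 2 else cos t ^ 2) else 0)"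
    if "i \<in> {0..m}" "j \<in> {0..m}" for i j
  proof -
    have fr: "(Eh (i-1) *v x) \<bullet> (Eh (j-1) *v x) = (if i - 1 = j - 1 then x \<bullet> x else 0)"
      if "i \<ge> 1" "j \<ge> 1" using Eh_frame[of "i-1" "j-1" x] that \<open>i \<in> {0..m}\<close> \<open>j \<in> {0..m}\<close> by auto
    show ?thesis
      using that M yEx[OF zM, of "i-1"] yEx[OF zM, of "j-1"] fr
      by (auto simp: f_def inner_commute)
  qed
  have "dim {w \<in> ?B. \<forall>i\<in>{0..m}. w \<bullet> h i = 0} + card {0..m} = dim ?B"
  proof (rule G_perp_dim)
    show "subspace ?B" by (rule eig_subspace[OF Q_lin])
    show "\<pi> v \<in> ?B" for v unfolding Q0_eigm by (simp add: \<pi>_def)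
    show "w \<bullet> \<pi> v = w \<bullet> v" if "w \<in> ?B" for w v
      using that unfolding Q0_eigm by (auto simp: \<pi>_def inner_prod_def)
    show "\<pi> (h i) \<bullet> \<pi> (h j) = 0" if "i \<in> {0..m}" "j \<in> {0..m}" "i \<noteq> j" for i j
      using pf that ff by simp
    show "\<pi> (h i) \<noteq> 0" if "i \<in> {0..m}" for i
    proof
      assume "\<pi> (h i) = 0"
      then have "f i \<bullet> f i = 0" using pf[OF that] by (simp add: zero_prod_def)
      then show False using ff[OF that that] sinpos cospos by (simp split: if_splits)
    qed
  qed simp
  moreover have "{w \<in> ?B. \<forall>i\<in>{0..m}. w \<bullet> h i = 0} = ?B \<inter> Tl z"
  proof (intro set_eqI iffI)
    fix w assume w: "w \<in> {w \<in> ?B. \<forall>i\<in>{0..m}. w \<bullet> h i = 0}"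
    then obtain v where wv: "w = (0, v)" unfolding Q0_eigm by auto
    have wz: "w \<bullet> z = 0" using w by (force simp: h_def)
    have "w \<bullet> Q i z = 0" if i: "i \<in> {0..m}" for i
    proof (cases "i = 0")
      case True
      have "w \<bullet> Q 0 z = - cot t * (w \<bullet> z)" by (simp add: wv zxy Qmap_def)
      then show ?thesis using True wz by simp
    next
      case False then show ?thesis using w i by (force simp: h_def)
    qed
    then show "w \<in> ?B \<inter> Tl z" using w wz by (simp add: Tl_def)
  next
    fix w assume "w \<in> ?B \<inter> Tl z"
    then show "w \<in> {w \<in> ?B. \<forall>i\<in>{0..m}. w \<bullet> h i = 0}" by (auto simp: Tl_def h_def)
  qed
  ultimately show ?thesis using dim_eigm by simp
qed

lemma dimN3:
  assumes z: "z \<in> Mplus E m t"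
  shows "dim (eigenspace_in UNIV (Q 0) (tan t) \<inter> Tl z) + (m + 1) = CARD('l)"
proof -
  obtain x y where zxy: "z = (x, y)" by fastforce
  have zM: "(x, y) \<in> Mplus E m t" using z zxy by simp
  note M = Mxy[OF zM]
  let ?B = "eigenspace_in UNIV (Q 0) (tan t)"
  define h where "h i = (if i = 0 then z else Q i z)" for i
  define \<pi> where "\<pi> w = (fst w, 0::real^'l)" for w :: "(real^'l) \<times> (real^'l)"
  define f where "f i = (if i = 0 then x else Eh (i-1) *v y)" for i
  have pf: "\<pi> (h i) = (f i, 0)" if "i \<in> {0..m}" for i
    using that fst_Qi[of i x y] by (auto simp: \<pi>_def h_def f_def zxy)
  have ff: "f i \<bullet> f j = (if i = j then (if i = 0 then cos t ^ 2 else sin t ^ 2) else 0)"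
    if "i \<in> {0..m}" "j \<in> {0..m}" for i j
  proof -
    have fr: "(Eh (i-1) *v y) \<bullet> (Eh (j-1) *v y) = (if i - 1 = j - 1 then y \<bullet> y else 0)"
      if "i \<ge> 1" "j \<ge> 1" using Eh_frame[of "i-1" "j-1" y] that \<open>i \<in> {0..m}\<close> \<open>j \<in> {0..m}\<close> by auto
    show ?thesis
      using that M yEx[OF zM, of "i-1"] yEx[OF zM, of "j-1"] fr
      by (auto simp: f_def inner_commute)
  qed
  have "dim {w \<in> ?B. \<forall>i\<in>{0..m}. w \<bullet> h i = 0} + card {0..m} = dim ?B"
  proof (rule G_perp_dim)
    show "subspace ?B" by (rule eig_subspace[OF Q_lin])
    show "\<pi> v \<in> ?B" for v unfolding Q0_eigp by (simp add: \<pi>_def)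
    show "w \<bullet> \<pi> v = w \<bullet> v" if "w \<in> ?B" for w v
      using that unfolding Q0_eigp by (auto simp: \<pi>_def inner_prod_def)
    show "\<pi> (h i) \<bullet> \<pi> (h j) = 0" if "i \<in> {0..m}" "j \<in> {0..m}" "i \<noteq> j" for i j
      using pf that ff by simp
    show "\<pi> (h i) \<noteq> 0" if "i \<in> {0..m}" for i
    proof
      assume "\<pi> (h i) = 0"
      then have "f i \<bullet> f i = 0" using pf[OF that] by (simp add: zero_prod_def)
      then show False using ff[OF that that] sinpos cospos by (simp split: if_splits)
    qed
  qed simp
  moreover have "{w \<in> ?B. \<forall>i\<in>{0..m}. w \<bullet> h i = 0} = ?B \<inter> Tl z"
  proof (intro set_eqI iffI)
    fix w assume w: "w \<in> {w \<in> ?B. \<forall>i\<in>{0..m}. w \<bullet> h i = 0}"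
    then obtain v where wv: "w = (v, 0)" unfolding Q0_eigp by auto
    have wz: "w \<bullet> z = 0" using w by (force simp: h_def)
    have "w \<bullet> Q i z = 0" if i: "i \<in> {0..m}" for i
    proof (cases "i = 0")
      case True
      have "w \<bullet> Q 0 z = tan t * (w \<bullet> z)" by (simp add: wv zxy Qmap_def)
      then show ?thesis using True wz by simp
    next
      case False then show ?thesis using w i by (force simp: h_def)
    qed
    then show "w \<in> ?B \<inter> Tl z" using w wz by (simp add: Tl_def)
  next
    fix w assume "w \<in> ?B \<inter> Tl z"
    then show "w \<in> {w \<in> ?B. \<forall>i\<in>{0..m}. w \<bullet> h i = 0}" by (auto simp: Tl_def h_def)
  qed
  ultimately show ?thesis using dim_eigp by simp
qed

end

context CS begin

lemma part3:
  assumes z: "z \<in> Mplus E m t"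
  defines "T \<equiv> Tl z"
    and "A \<equiv> shape_operator (Mplus E m t) (Q 0) z"
    and "Pp \<equiv> eigenspace_in UNIV (Q 0) (- cot t) \<inter> Tl z"
    and "Z \<equiv> span ((\<lambda>a. inv (Q 0) (Q a z)) ` {1..m})"
    and "N \<equiv> eigenspace_in UNIV (Q 0) (tan t) \<inter> Tl z"
  shows "{c. \<exists>X\<in>T. X \<noteq> 0 \<and> A X = c *\<^sub>R X} \<subseteq> {cot t, 0, - tan t}"
    and "eigenspace_in T A (cot t) = Pp" and "eigenspace_in T A 0 = Z" and "eigenspace_in T A (- tan t) = N"
    and "direct_sum3 T Pp Z N"
    and "int (dim Pp) = int CARD('l) - int m - 1"
    and "int (dim Z) = int m"
    and "int (dim N) = int CARD('l) - int m - 1"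
proof -
  have Zeq: "Z = span ((\<lambda>a. Rm (Q a z)) ` {1..m})" unfolding Z_def inv_Q0 ..
  have Qs: "Q 0 u \<bullet> v = u \<bullet> Q 0 v" for u v using Q_sym[of 0] by simp
  have sT: "subspace T" unfolding T_def by (rule Tl_subspace)
  have sP: "subspace Pp" unfolding Pp_def by (rule subspace_inter[OF eig_subspace[OF Q_lin] Tl_subspace])
  have sN: "subspace N" unfolding N_def by (rule subspace_inter[OF eig_subspace[OF Q_lin] Tl_subspace])
  have sZ: "subspace Z" unfolding Zeq by simp
  have RR: "Rm (Rm u) = (ra * ra + rb * rb) *\<^sub>R u + (2 * ra * rb) *\<^sub>R P 0 u" for u
    using P_inv[of 0 u] by (simp add: Rm_eq P_add P_scale algebra_simps scaleR_add_left flip: scaleR_2)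
  have gT: "Rm (Q a z) \<in> Tl z" if a: "a \<in> {1..m}" for a
  proof -
    have a1: "1 \<le> a" "a \<le> m" "a \<noteq> 0" using a by auto
    have "Rm (Q a z) \<bullet> z = ra * (Q a z \<bullet> z) + rb * (P 0 (P a z) \<bullet> z)"
      using Q_P[OF a1(3)] by (simp add: Rm_eq inner_add_left)
    also have "\<dots> = 0" using zQ[OF z a1(2)] P_skew2[of 0 a z] a1 by (simp add: inner_commute)
    finally have 1: "Rm (Q a z) \<bullet> z = 0" .
    have "Rm (Q a z) \<bullet> Q i z = 0" if i: "i \<in> {0..m}" for i
    proof (cases "i = 0")
      case True
      have "Rm (Q a z) \<bullet> Q 0 z = Q a z \<bullet> z" using Rm_sym Rm_Q0 by metis
      then show ?thesis using True zQ[OF z a1(2)] by (simp add: inner_commute)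
    next
      case False then show ?thesis using RQ_Q[OF z a] i by auto
    qed
    then show ?thesis using 1 by (simp add: Tl_def)
  qed
  have "(\<lambda>a. Rm (Q a z)) ` {1..m} \<subseteq> Tl z" using gT by blast
  then have subZ: "Z \<subseteq> T" unfolding Zeq T_def by (rule span_minimal[OF _ Tl_subspace])
  have subP: "Pp \<subseteq> T" and subN: "N \<subseteq> T" by (auto simp: Pp_def N_def T_def)
  have o1: "p \<bullet> q = 0" if "p \<in> Pp" "q \<in> Z" for p q
  proof (rule perp_span[OF _ that(2)[unfolded Zeq]])
    fix g assume "g \<in> (\<lambda>a. Rm (Q a z)) ` {1..m}"
    then obtain a where a: "a \<in> {1..m}" "g = Rm (Q a z)" by blast
    have "Q 0 p \<bullet> g = p \<bullet> Q a z" using Qs Q0_Rm a by metis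
    moreover have "Q 0 p = (- cot t) *\<^sub>R p" using that(1) by (simp add: Pp_def eigenspace_in_def)
    moreover have "p \<bullet> Q a z = 0" using that(1) a by (auto simp: Pp_def Tl_def)
    ultimately show "p \<bullet> g = 0" using cotpos by simp
  qed
  have o3: "q \<bullet> r = 0" if "q \<in> Z" "r \<in> N" for q r
  proof -
    have "r \<bullet> q = 0"
    proof (rule perp_span[OF _ that(1)[unfolded Zeq]])
      fix g assume "g \<in> (\<lambda>a. Rm (Q a z)) ` {1..m}"
      then obtain a where a: "a \<in> {1..m}" "g = Rm (Q a z)" by blast
      have "Q 0 r \<bullet> g = r \<bullet> Q a z" using Qs Q0_Rm a by metis
      moreover have "Q 0 r = tan t *\<^sub>R r" using that(2) by (simp add: N_def eigenspace_in_def)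
      moreover have "r \<bullet> Q a z = 0" using that(2) a by (auto simp: N_def Tl_def)
      ultimately show "r \<bullet> g = 0" using tanpos by simp
    qed
    then show ?thesis by (simp add: inner_commute)
  qed
  have o2: "p \<bullet> r = 0" if "p \<in> Pp" "r \<in> N" for p r
  proof -
    have "Q 0 p \<bullet> r = p \<bullet> Q 0 r" by (rule Qs)
    then have "- cot t * (p \<bullet> r) = tan t * (p \<bullet> r)" using that by (simp add: Pp_def N_def eigenspace_in_def)
    then have "(tan t + cot t) * (p \<bullet> r) = 0" by (simp add: algebra_simps)
    then show ?thesis using tanpos cotpos by simp
  qed
  have dZ: "dim Z = m"
  proof -
    have "dim Z = card {1..m}" unfolding Zeq
    proof (rule G_orth_dim)
      show "Rm (Q i z) \<bullet> Rm (Q j z) = 0" if "i \<in> {1..m}" "j \<in> {1..m}" "i \<noteq> j" for i j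
      proof -
        have i1: "i \<le> m" "i \<noteq> 0" and j1: "j \<le> m" "j \<noteq> 0" using that by auto
        have "Rm (Q i z) \<bullet> Rm (Q j z) = Q i z \<bullet> Rm (Rm (Q j z))" by (rule Rm_sym)
        also have "\<dots> = (ra * ra + rb * rb) * (Q i z \<bullet> Q j z) + (2 * ra * rb) * (P i z \<bullet> P 0 (P j z))"
          using Q_P i1 j1 by (simp add: RR inner_add_right)
        also have "P i z \<bullet> P 0 (P j z) = z \<bullet> P i (P 0 (P j z))" using P_sym[OF i1(1)] by simp
        also have "\<dots> = 0" using P_skew3[of i 0 j z] i1 j1 that(3) by simp
        finally show ?thesis using QQ[OF z i1(1) j1(1)] that(3) by simp
      qed
      show "Rm (Q i z) \<noteq> 0" if "i \<in> {1..m}" for i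
      proof
        assume "Rm (Q i z) = 0"
        then have "Q 0 (Rm (Q i z)) = 0" using linear_0[OF Q_lin] by simp
        then show False using Q0_Rm QQ[OF z, of i i] that by simp
      qed
    qed simp
    then show ?thesis by simp
  qed
  have dP: "dim Pp + (m + 1) = CARD('l)" unfolding Pp_def by (rule dimPp3[OF z])
  have dN: "dim N + (m + 1) = CARD('l)" unfolding N_def by (rule dimN3[OF z])
  have dT: "dim T + (m + 2) = 2 * CARD('l)" unfolding T_def by (rule dimT[OF z])
  have d: "dim Pp + dim Z + dim N = dim T" using dP dN dT dZ by linarith
  have add: "A (u + v) = A u + A v" for u v unfolding A_def by (rule shape_add[OF z])
  have eP: "A p = cot t *\<^sub>R p" if "p \<in> Pp" for p
  proof -
    have "Q 0 p = (- cot t) *\<^sub>R p" "(- cot t) *\<^sub>R p \<in> Tl z"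
      using that by (auto simp: Pp_def eigenspace_in_def subspace_scale[OF Tl_subspace] subspace_neg[OF Tl_subspace])
    then show ?thesis unfolding A_def using shape_eq[OF z] G_proj_in[OF Tl_subspace] by simp
  qed
  have eN: "A r = (- tan t) *\<^sub>R r" if "r \<in> N" for r
  proof -
    have "Q 0 r = tan t *\<^sub>R r" "tan t *\<^sub>R r \<in> Tl z"
      using that by (auto simp: N_def eigenspace_in_def subspace_scale[OF Tl_subspace])
    then show ?thesis unfolding A_def using shape_eq[OF z] G_proj_in[OF Tl_subspace] by simp
  qed
  have eZ: "A q = 0" if "q \<in> Z" for q
  proof -
    have "\<forall>w\<in>Tl z. Q 0 q \<bullet> w = 0"
    proof
      fix w assume w: "w \<in> Tl z"
      have "Q 0 w \<bullet> q = 0"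
      proof (rule perp_span[OF _ that[unfolded Zeq]])
        fix g assume "g \<in> (\<lambda>a. Rm (Q a z)) ` {1..m}"
        then obtain a where a: "a \<in> {1..m}" "g = Rm (Q a z)" by blast
        have "Q 0 w \<bullet> g = w \<bullet> Q a z" using Qs Q0_Rm a by metis
        then show "Q 0 w \<bullet> g = 0" using w a by (simp add: Tl_def)
      qed
      then show "Q 0 q \<bullet> w = 0" using Qs by (simp add: inner_commute)
    qed
    then show ?thesis unfolding A_def using shape_eq[OF z] G_proj_perp[OF Tl_subspace] by simp
  qed
  have cs: "cot t \<noteq> 0" "- tan t \<noteq> 0" "cot t \<noteq> - tan t" using tanpos cotpos by auto
  note G = G_eigen[OF sT sP sZ sN subP subZ subN o1 o2 o3 d add eP eZ eN cs]
  show "{c. \<exists>X\<in>T. X \<noteq> 0 \<and> A X = c *\<^sub>R X} \<subseteq> {cot t, 0, - tan t}" using G(1) by simp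
  show "eigenspace_in T A (cot t) = Pp" using G(2) by simp
  show "eigenspace_in T A 0 = Z" using G(3) by simp
  show "eigenspace_in T A (- tan t) = N" using G(4) by simp
  show "direct_sum3 T Pp Z N" using G(5) by simp
  show "int (dim Pp) = int CARD('l) - int m - 1" using dP by linarith
  show "int (dim Z) = int m" using dZ by simp
  show "int (dim N) = int CARD('l) - int m - 1" using dN by linarith
qed

end

theorem proposition3p2:
  fixes E :: "nat \<Rightarrow> real^'l^'l" and m :: nat and t :: real
  assumes m_pos: "m \<ge> 1"
    and E_orth: "\<forall>\<alpha>\<in>{1..m-1}. orthogonal_matrix (E \<alpha>)"
    and E_cliff: "\<forall>\<alpha>\<in>{1..m-1}. \<forall>\<beta>\<in>{1..m-1}.
                    E \<alpha> ** E \<beta> + E \<beta> ** E \<alpha> = mat (if \<alpha> = \<beta> then -2 else 0)"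
    and t_pos: "0 < t" and t_le: "t \<le> pi / 4"
  shows
    "Mplus E m t = {z. norm z = 1 \<and> (\<forall>\<alpha>\<in>{0..m}. z \<bullet> Qmap E t \<alpha> z = 0)} \<and>
     (\<forall>z\<in>Mplus E m t.
       \<comment> \<open>(1)\<close>
       normal_space_sphere (Mplus E m t) z = span ((\<lambda>\<alpha>. Qmap E t \<alpha> z) ` {0..m}) \<and>
       tangent_space (Mplus E m t) z = {w. w \<bullet> z = 0 \<and> (\<forall>i\<in>{0..m}. w \<bullet> Qmap E t i z = 0)} \<and>
       direct_sum3 UNIV (tangent_space (Mplus E m t) z) (normal_space_sphere (Mplus E m t) z) (span {z}) \<and>
       \<comment> \<open>(2)\<close>
       (\<forall>\<alpha>\<in>{1..m}.
          let T = tangent_space (Mplus E m t) z;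
              A = shape_operator (Mplus E m t) (Qmap E t \<alpha>) z;
              Ep = eigenspace_in T A 1;
              E0 = eigenspace_in T A 0;
              Em = eigenspace_in T A (-1)
          in {c. \<exists>X\<in>T. X \<noteq> 0 \<and> A X = c *\<^sub>R X} \<subseteq> {1, 0, -1} \<and>
             Ep = eigenspace_in UNIV (Qmap E t \<alpha>) (-1) \<inter> T \<and>
             E0 = span ((\<lambda>\<beta>. Qmap E t \<alpha> (Qmap E t \<beta> z)) ` ({0..m} - {\<alpha>})) \<and>
             Em = eigenspace_in UNIV (Qmap E t \<alpha>) 1 \<inter> T \<and>
             int (dim Ep) = int CARD('l) - int m - 1 \<and>
             int (dim E0) = int m \<and>
             int (dim Em) = int CARD('l) - int m - 1 \<and>
             direct_sum3 T Ep E0 Em) \<and>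
       \<comment> \<open>(3)\<close>
       (let T = tangent_space (Mplus E m t) z;
            A = shape_operator (Mplus E m t) (Qmap E t 0) z;
            Ep = eigenspace_in T A (cot t);
            E0 = eigenspace_in T A 0;
            Em = eigenspace_in T A (- tan t)
        in norm (Qmap E t 0 z) = 1 \<and>
           {c. \<exists>X\<in>T. X \<noteq> 0 \<and> A X = c *\<^sub>R X} \<subseteq> {cot t, 0, - tan t} \<and>
           Ep = eigenspace_in UNIV (Qmap E t 0) (- cot t) \<inter> T \<and>
           E0 = span ((\<lambda>\<alpha>. inv (Qmap E t 0) (Qmap E t \<alpha> z)) ` {1..m}) \<and>
           Em = eigenspace_in UNIV (Qmap E t 0) (tan t) \<inter> T \<and>
           int (dim Ep) = int CARD('l) - int m - 1 \<and>
           int (dim E0) = int m \<and>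
           int (dim Em) = int CARD('l) - int m - 1 \<and>
           direct_sum3 T Ep E0 Em))"
proof -
  interpret CS E m t
  proof
    show "E k *v (E k *v v) = - v" if "k \<in> {1..m-1}" for k v using E_facts(1)[OF E_orth E_cliff that] .
    show "(E k *v u) \<bullet> v = - (u \<bullet> (E k *v v))" if "k \<in> {1..m-1}" for k u v using E_facts(2)[OF E_orth E_cliff that] .
    show "E j *v (E k *v v) = - (E k *v (E j *v v))" if "j \<in> {1..m-1}" "k \<in> {1..m-1}" "j \<noteq> k" for j k v
      using E_facts(3)[OF E_orth E_cliff that(2) that(1) that(3)] .
  qed (use m_pos t_pos t_le in auto)
  have main: "normal_space_sphere (Mplus E m t) z = span ((\<lambda>\<alpha>. Qmap E t \<alpha> z) ` {0..m}) \<and>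
       tangent_space (Mplus E m t) z = {w. w \<bullet> z = 0 \<and> (\<forall>i\<in>{0..m}. w \<bullet> Qmap E t i z = 0)} \<and>
       direct_sum3 UNIV (tangent_space (Mplus E m t) z) (normal_space_sphere (Mplus E m t) z) (span {z}) \<and>
       (\<forall>\<alpha>\<in>{1..m}.
          let T = tangent_space (Mplus E m t) z;
              A = shape_operator (Mplus E m t) (Qmap E t \<alpha>) z;
              Ep = eigenspace_in T A 1;
              E0 = eigenspace_in T A 0;
              Em = eigenspace_in T A (-1)
          in {c. \<exists>X\<in>T. X \<noteq> 0 \<and> A X = c *\<^sub>R X} \<subseteq> {1, 0, -1} \<and>
             Ep = eigenspace_in UNIV (Qmap E t \<alpha>) (-1) \<inter> T \<and>
             E0 = span ((\<lambda>\<beta>. Qmap E t \<alpha> (Qmap E t \<beta> z)) ` ({0..m} - {\<alpha>})) \<and>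
             Em = eigenspace_in UNIV (Qmap E t \<alpha>) 1 \<inter> T \<and>
             int (dim Ep) = int CARD('l) - int m - 1 \<and>
             int (dim E0) = int m \<and>
             int (dim Em) = int CARD('l) - int m - 1 \<and>
             direct_sum3 T Ep E0 Em) \<and>
       (let T = tangent_space (Mplus E m t) z;
            A = shape_operator (Mplus E m t) (Qmap E t 0) z;
            Ep = eigenspace_in T A (cot t);
            E0 = eigenspace_in T A 0;
            Em = eigenspace_in T A (- tan t)
        in norm (Qmap E t 0 z) = 1 \<and>
           {c. \<exists>X\<in>T. X \<noteq> 0 \<and> A X = c *\<^sub>R X} \<subseteq> {cot t, 0, - tan t} \<and>
           Ep = eigenspace_in UNIV (Qmap E t 0) (- cot t) \<inter> T \<and>
           E0 = span ((\<lambda>\<alpha>. inv (Qmap E t 0) (Qmap E t \<alpha> z)) ` {1..m}) \<and>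
           Em = eigenspace_in UNIV (Qmap E t 0) (tan t) \<inter> T \<and>
           int (dim Ep) = int CARD('l) - int m - 1 \<and>
           int (dim E0) = int m \<and>
           int (dim Em) = int CARD('l) - int m - 1 \<and>
           direct_sum3 T Ep E0 Em)" if z: "z \<in> Mplus E m t" for z
  proof (intro conjI ballI)
    show "normal_space_sphere (Mplus E m t) z = span ((\<lambda>\<alpha>. Qmap E t \<alpha> z) ` {0..m})"
      by (rule normal_eq[OF z])
    show "tangent_space (Mplus E m t) z = {w. w \<bullet> z = 0 \<and> (\<forall>i\<in>{0..m}. w \<bullet> Qmap E t i z = 0)}"
      using tangent_eq[OF z] by (simp add: Tl_def)
    show "direct_sum3 UNIV (tangent_space (Mplus E m t) z) (normal_space_sphere (Mplus E m t) z) (span {z})"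
      using dsum1[OF z] by (simp add: tangent_eq[OF z] normal_eq[OF z])
  next
    fix \<alpha> assume a: "\<alpha> \<in> {1..m}"
    note R = part2[OF z a]
    show "let T = tangent_space (Mplus E m t) z;
              A = shape_operator (Mplus E m t) (Qmap E t \<alpha>) z;
              Ep = eigenspace_in T A 1;
              E0 = eigenspace_in T A 0;
              Em = eigenspace_in T A (-1)
          in {c. \<exists>X\<in>T. X \<noteq> 0 \<and> A X = c *\<^sub>R X} \<subseteq> {1, 0, -1} \<and>
             Ep = eigenspace_in UNIV (Qmap E t \<alpha>) (-1) \<inter> T \<and>
             E0 = span ((\<lambda>\<beta>. Qmap E t \<alpha> (Qmap E t \<beta> z)) ` ({0..m} - {\<alpha>})) \<and>
             Em = eigenspace_in UNIV (Qmap E t \<alpha>) 1 \<inter> T \<and>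
             int (dim Ep) = int CARD('l) - int m - 1 \<and>
             int (dim E0) = int m \<and>
             int (dim Em) = int CARD('l) - int m - 1 \<and>
             direct_sum3 T Ep E0 Em"
      unfolding Let_def tangent_eq[OF z] using R by simp
  next
    note R = part3[OF z]
    have n: "norm (Qmap E t 0 z) = 1" using Q0z_norm[OF z] by (simp add: norm_eq_1)
    show "let T = tangent_space (Mplus E m t) z;
            A = shape_operator (Mplus E m t) (Qmap E t 0) z;
            Ep = eigenspace_in T A (cot t);
            E0 = eigenspace_in T A 0;
            Em = eigenspace_in T A (- tan t)
        in norm (Qmap E t 0 z) = 1 \<and>
           {c. \<exists>X\<in>T. X \<noteq> 0 \<and> A X = c *\<^sub>R X} \<subseteq> {cot t, 0, - tan t} \<and>
           Ep = eigenspace_in UNIV (Qmap E t 0) (- cot t) \<inter> T \<and>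
           E0 = span ((\<lambda>\<alpha>. inv (Qmap E t 0) (Qmap E t \<alpha> z)) ` {1..m}) \<and>
           Em = eigenspace_in UNIV (Qmap E t 0) (tan t) \<inter> T \<and>
           int (dim Ep) = int CARD('l) - int m - 1 \<and>
           int (dim E0) = int m \<and>
           int (dim Em) = int CARD('l) - int m - 1 \<and>
           direct_sum3 T Ep E0 Em"
      unfolding Let_def tangent_eq[OF z] using R n by simp
  qed
  show ?thesis using M_eq main by blast
qed

end
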